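(* For $\mathbf F\in\mathcal M^n$ and $\mathbf G\in\overline{\mathcal A_n(\mathbf F)}$, we have $\mathcal D_n(\mathbf F)\subset\mathcal D_n(\mathbf G)$.
   Context: Work on an atomless probability space. $\mathcal M$ is the set of cdfs on $\mathbb{R}$. $\mathcal D_n(\mathbf F)=\{\text{cdf of }X_1+\dots+X_n:X_i\sim F_i\}$. $\mathcal Q_n$ is the set of $n\times n$ doubly stochastic matrices; $\Lambda\mathbf F$ has $i$-th component $\sum_j\Lambda_{ij}F_j$. For $x\in\mathbb{R}$, $T_x(F)$ is the distribution of $X+x$ with $X\sim F$, and for $\mathbf x\in\mathbb{R}^n$, $\mathbf T_{\mathbf x}(\mathbf F)=(T_{x_1}(F_1),\dots,T_{x_n}(F_n))$. Define $\mathcal A_n(\mathbf F)=\{\Lambda\mathbf T_{\mathbf x}(\mathbf F):\Lambda\in\mathcal Q_n,\ \mathbf x\in\mathbb{R}^n,\ x_1+\dots+x_n=0\}$, and let $\overline{\mathcal A_n(\mathbf F)}$ be the closure, with respect to (componentwise) weak convergence, of the convex hull of $\mathcal A_n(\mathbf F)$, where convex combinations of tuples are taken componentwise as mixtures of cdfs. *)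

theory Defs
  imports "HOL-Probability.Probability"
begin

text \<open>n-tuples of cdfs are represented as functions of type nat => real => real;
  only the components with index i < n are relevant.\<close>

definition is_cdf :: "(real \<Rightarrow> real) \<Rightarrow> bool" where
  "is_cdf F \<longleftrightarrow> right_continuous_mono F 0 1"

definition atomless :: "'a measure \<Rightarrow> bool" where
  "atomless M \<longleftrightarrow> (\<forall>A \<in> sets M. 0 < measure M A \<longrightarrow>
      (\<exists>B \<in> sets M. B \<subseteq> A \<and> 0 < measure M B \<and> measure M B < measure M A))"

definition rv_cdf :: "'a measure \<Rightarrow> ('a \<Rightarrow> real) \<Rightarrow> real \<Rightarrow> real" where
  "rv_cdf M X = (\<lambda>t. measure M {\<omega> \<in> space M. X \<omega> \<le> t})"

definition D_set :: "'a measure \<Rightarrow> nat \<Rightarrow> (nat \<Rightarrow> real \<Rightarrow> real) \<Rightarrow> (real \<Rightarrow> real) set" where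
  "D_set M n F = {H. \<exists>X :: nat \<Rightarrow> 'a \<Rightarrow> real.
      (\<forall>i<n. X i \<in> borel_measurable M \<and> rv_cdf M (X i) = F i) \<and>
      H = rv_cdf M (\<lambda>\<omega>. \<Sum>i<n. X i \<omega>)}"

definition doubly_stochastic :: "nat \<Rightarrow> (nat \<Rightarrow> nat \<Rightarrow> real) \<Rightarrow> bool" where
  "doubly_stochastic n L \<longleftrightarrow> (\<forall>i<n. \<forall>j<n. 0 \<le> L i j) \<and>
      (\<forall>i<n. (\<Sum>j<n. L i j) = 1) \<and> (\<forall>j<n. (\<Sum>i<n. L i j) = 1)"

definition shift_cdf :: "real \<Rightarrow> (real \<Rightarrow> real) \<Rightarrow> real \<Rightarrow> real" where
  "shift_cdf x F = (\<lambda>t. F (t - x))"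

definition in_A :: "nat \<Rightarrow> (nat \<Rightarrow> real \<Rightarrow> real) \<Rightarrow> (nat \<Rightarrow> real \<Rightarrow> real) \<Rightarrow> bool" where
  "in_A n F G \<longleftrightarrow> (\<exists>L x. doubly_stochastic n L \<and> (\<Sum>i<n. x i) = 0 \<and>
      (\<forall>i<n. G i = (\<lambda>t. \<Sum>j<n. L i j * shift_cdf (x j) (F j) t)))"

definition in_conv_A :: "nat \<Rightarrow> (nat \<Rightarrow> real \<Rightarrow> real) \<Rightarrow> (nat \<Rightarrow> real \<Rightarrow> real) \<Rightarrow> bool" where
  "in_conv_A n F G \<longleftrightarrow> (\<exists>(m::nat) (w::nat \<Rightarrow> real) (H::nat \<Rightarrow> nat \<Rightarrow> real \<Rightarrow> real).
      (\<forall>k<m. 0 \<le> w k \<and> in_A n F (H k)) \<and> (\<Sum>k<m. w k) = 1 \<and>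
      (\<forall>i<n. G i = (\<lambda>t. \<Sum>k<m. w k * H k i t)))"

text \<open>The weak topology on cdfs is metrizable (Levy metric),
  so the closure is the sequential closure.\<close>
definition in_closure_A :: "nat \<Rightarrow> (nat \<Rightarrow> real \<Rightarrow> real) \<Rightarrow> (nat \<Rightarrow> real \<Rightarrow> real) \<Rightarrow> bool" where
  "in_closure_A n F G \<longleftrightarrow> (\<forall>i<n. is_cdf (G i)) \<and>
      (\<exists>S :: nat \<Rightarrow> nat \<Rightarrow> real \<Rightarrow> real. (\<forall>k. in_conv_A n F (S k)) \<and>
         (\<forall>i<n. weak_conv (\<lambda>k. S k i) (G i)))"

end

theory Submission
  imports Defs "HOL-Library.Diagonal_Subsequence"
begin

lemma hall_thm:
  fixes A :: "'i \<Rightarrow> 'j set"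
  shows "finite I \<Longrightarrow> (\<forall>i\<in>I. finite (A i)) \<Longrightarrow> (\<forall>S\<subseteq>I. card S \<le> card (\<Union>(A ` S))) \<Longrightarrow>
    \<exists>f. inj_on f I \<and> (\<forall>i\<in>I. f i \<in> A i)"
proof (induction "card I" arbitrary: I A rule: less_induct)
  case less
  note fin = less.prems(1) and finA = less.prems(2) and hall = less.prems(3)
  show ?case
  proof (cases "I = {}")
    case True then show ?thesis by auto
  next
    case nonempty: False
    show ?thesis
    proof (cases "\<exists>S. S \<subseteq> I \<and> S \<noteq> {} \<and> S \<noteq> I \<and> card (\<Union>(A ` S)) \<le> card S")
      case False
      note noS = False
      from nonempty obtain i where i: "i \<in> I" by auto
      have "card {i} \<le> card (\<Union>(A ` {i}))" using hall i by auto
      then have "A i \<noteq> {}" by auto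
      then obtain j where j: "j \<in> A i" by auto
      define I' where "I' = I - {i}"
      define A' where "A' = (\<lambda>k. A k - {j})"
      have "card I' < card I" unfolding I'_def using fin i by (rule card_Diff1_less)
      moreover have "finite I'" using fin I'_def by auto
      moreover have "\<forall>k\<in>I'. finite (A' k)" using finA I'_def A'_def by auto
      moreover have "\<forall>S\<subseteq>I'. card S \<le> card (\<Union>(A' ` S))"
      proof (intro allI impI)
        fix S assume S: "S \<subseteq> I'"
        show "card S \<le> card (\<Union>(A' ` S))"
        proof (cases "S = {}")
          case True then show ?thesis by simp
        next
          case False
          have "S \<noteq> I" using S i I'_def by auto
          moreover have "S \<subseteq> I" using S I'_def by auto
          ultimately have lt: "card S < card (\<Union>(A ` S))" using False noS by (meson not_le)
          have finU: "finite (\<Union>(A ` S))" using finA \<open>S \<subseteq> I\<close> fin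
            by (meson finite_UN_I rev_finite_subset subsetD)
          have eq: "\<Union>(A' ` S) = \<Union>(A ` S) - {j}" unfolding A'_def by auto
          have "card (\<Union>(A ` S)) - 1 \<le> card (\<Union>(A ` S) - {j})"
            using finU by (metis card_Diff_singleton_if diff_le_self order_refl)
          then show ?thesis using lt eq by simp
        qed
      qed
      ultimately obtain f' where f': "inj_on f' I'" "\<forall>k\<in>I'. f' k \<in> A' k"
        using less.hyps by blast
      define f where "f = f'(i := j)"
      have "inj_on f I"
      proof (rule inj_onI)
        fix x y assume xy: "x \<in> I" "y \<in> I" "f x = f y"
        show "x = y"
        proof (cases "x = i"; cases "y = i")
          assume "x = i" "y \<noteq> i"
          then have "y \<in> I'" using xy I'_def by auto
          then show ?thesis using xy f' \<open>x = i\<close> \<open>y \<noteq> i\<close> unfolding f_def A'_def by auto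
        next
          assume "x \<noteq> i" "y = i"
          then have "x \<in> I'" using xy I'_def by auto
          then show ?thesis using xy f' \<open>x \<noteq> i\<close> \<open>y = i\<close> unfolding f_def A'_def by auto
        next
          assume "x \<noteq> i" "y \<noteq> i"
          then show ?thesis using xy f'(1) unfolding f_def I'_def by (auto dest: inj_onD)
        qed simp
      qed
      moreover have "\<forall>k\<in>I. f k \<in> A k" using f' j unfolding f_def I'_def A'_def by auto
      ultimately show ?thesis by blast
    next
      case True
      then obtain S where S: "S \<subseteq> I" "S \<noteq> {}" "S \<noteq> I" "card (\<Union>(A ` S)) \<le> card S" by blast
      have finS: "finite S" using S fin finite_subset by auto
      have "card S < card I" using S fin by (simp add: psubset_card_mono psubsetI)
      moreover have "\<forall>k\<in>S. finite (A k)" using finA S by auto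
      moreover have "\<forall>T\<subseteq>S. card T \<le> card (\<Union>(A ` T))" using hall S by auto
      ultimately obtain g where g: "inj_on g S" "\<forall>k\<in>S. g k \<in> A k"
        using less.hyps finS by blast
      define N where "N = \<Union>(A ` S)"
      have finN: "finite N" unfolding N_def using finS finA S by auto
      define A'' where "A'' = (\<lambda>k. A k - N)"
      have "card (I - S) < card I" using S fin
        by (metis Diff_empty Diff_subset card_Diff_subset card_gt_0_iff diff_less finS finite_Diff2 finite_subset psubsetI psubset_card_mono subset_Diff_insert subset_empty)
      moreover have "finite (I - S)" using fin by auto
      moreover have "\<forall>k\<in>I - S. finite (A'' k)" using finA A''_def by auto
      moreover have "\<forall>T\<subseteq>I - S. card T \<le> card (\<Union>(A'' ` T))"
      proof (intro allI impI)
        fix T assume T: "T \<subseteq> I - S"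
        have finT: "finite T" using T fin finite_subset by blast
        have disj: "T \<inter> S = {}" using T by auto
        have "T \<union> S \<subseteq> I" using T S by auto
        then have "card (T \<union> S) \<le> card (\<Union>(A ` (T \<union> S)))" using hall by blast
        also have "\<Union>(A ` (T \<union> S)) = (\<Union>(A'' ` T)) \<union> N" unfolding A''_def N_def by auto
        also have "card ((\<Union>(A'' ` T)) \<union> N) = card (\<Union>(A'' ` T)) + card N"
          by (rule card_Un_disjoint) (use finT finA T finN A''_def in auto)
        finally have "card T + card S \<le> card (\<Union>(A'' ` T)) + card N"
          using card_Un_disjoint[OF finT finS disj] by simp
        moreover have "card N \<le> card S" using S(4) N_def by simp
        ultimately show "card T \<le> card (\<Union>(A'' ` T))" by linarith
      qed
      ultimately obtain h where h: "inj_on h (I - S)" "\<forall>k\<in>I - S. h k \<in> A'' k"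
        using less.hyps by blast
      define f where "f = (\<lambda>k. if k \<in> S then g k else h k)"
      have "inj_on f I"
      proof (rule inj_onI)
        fix x y assume xy: "x \<in> I" "y \<in> I" "f x = f y"
        have gN: "k \<in> S \<Longrightarrow> g k \<in> N" for k using g N_def by auto
        have hN: "k \<in> I - S \<Longrightarrow> h k \<notin> N" for k using h A''_def by auto
        show "x = y"
          using xy gN hN g(1) h(1) unfolding f_def
          by (cases "x \<in> S"; cases "y \<in> S") (auto dest: inj_onD, metis, metis)
      qed
      moreover have "\<forall>k\<in>I. f k \<in> A k" using g h unfolding f_def A''_def by auto
      ultimately show ?thesis by blast
    qed
  qed
qed

lemma sum_permutes_reindex:
  assumes "p permutes S" "finite S"
  shows "(\<Sum>i\<in>S. g (p i)) = (\<Sum>k\<in>S. (g k :: real))"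
proof -
  have "(\<Sum>k\<in>S. g k) = (\<Sum>k\<in>p ` S. g k)" using permutes_image[OF assms(1)] by simp
  also have "\<dots> = (\<Sum>i\<in>S. g (p i))" by (rule sum.reindex_cong[OF permutes_inj_on[OF assms(1)]]) auto
  finally show ?thesis by simp
qed

lemma pos_diag:
  fixes L :: "nat \<Rightarrow> nat \<Rightarrow> real"
  assumes nn: "\<forall>i<n. \<forall>j<n. 0 \<le> L i j" and rows: "\<forall>i<n. (\<Sum>j<n. L i j) = s"
    and cols: "\<forall>j<n. (\<Sum>i<n. L i j) = s" and sp: "s > 0"
  shows "\<exists>p. p permutes {..<n} \<and> (\<forall>i<n. L i (p i) > 0)"
proof -
  define A where "A = (\<lambda>i. {j. j < n \<and> 0 < L i j})"
  have "\<forall>S\<subseteq>{..<n}. card S \<le> card (\<Union>(A ` S))"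
  proof (intro allI impI)
    fix S assume S: "S \<subseteq> {..<n}"
    define N where "N = \<Union>(A ` S)"
    have NS: "N \<subseteq> {..<n}" unfolding N_def A_def by auto
    have finS: "finite S" using S finite_subset by blast
    have finN: "finite N" using NS finite_subset by blast
    have "real (card S) * s = (\<Sum>i\<in>S. s)" by simp
    also have "\<dots> = (\<Sum>i\<in>S. \<Sum>j<n. L i j)" using rows S by (intro sum.cong) auto
    also have "\<dots> = (\<Sum>i\<in>S. \<Sum>j\<in>N. L i j)"
    proof (rule sum.cong[OF refl])
      fix i assume i: "i \<in> S"
      show "(\<Sum>j<n. L i j) = (\<Sum>j\<in>N. L i j)"
      proof (rule sum.mono_neutral_right)
        show "finite {..<n}" by simp
        show "N \<subseteq> {..<n}" by (rule NS)
        show "\<forall>j\<in>{..<n} - N. L i j = 0"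
        proof
          fix j assume j: "j \<in> {..<n} - N"
          then have "\<not> 0 < L i j" using i unfolding N_def A_def by auto
          moreover have "0 \<le> L i j" using nn i S j by auto
          ultimately show "L i j = 0" by simp
        qed
      qed
    qed
    also have "\<dots> = (\<Sum>j\<in>N. \<Sum>i\<in>S. L i j)" by (rule sum.swap)
    also have "\<dots> \<le> (\<Sum>j\<in>N. \<Sum>i<n. L i j)"
      by (rule sum_mono, rule sum_mono2) (use S nn NS in auto)
    also have "\<dots> = (\<Sum>j\<in>N. s)" using cols NS by (intro sum.cong) auto
    also have "\<dots> = real (card N) * s" by simp
    finally have "real (card S) * s \<le> real (card N) * s" .
    then show "card S \<le> card N" using sp by simp
  qed
  moreover have "\<forall>i\<in>{..<n}. finite (A i)" unfolding A_def by auto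
  ultimately obtain f where f: "inj_on f {..<n}" "\<forall>i\<in>{..<n}. f i \<in> A i"
    using hall_thm[of "{..<n}" A] by auto
  define p where "p = (\<lambda>i. if i < n then f i else i)"
  have "inj_on p {..<n}" using f(1) unfolding p_def inj_on_def by auto
  then have "p permutes {..<n}"
    by (rule inj_imp_permutes) (use f(2) in \<open>auto simp: p_def A_def\<close>)
  moreover have "\<forall>i<n. L i (p i) > 0" using f(2) unfolding p_def A_def by auto
  ultimately show ?thesis by blast
qed

lemma birkhoff_gen:
  fixes L :: "nat \<Rightarrow> nat \<Rightarrow> real"
  shows "\<forall>i<n. \<forall>j<n. 0 \<le> L i j \<Longrightarrow> \<forall>i<n. (\<Sum>j<n. L i j) = s \<Longrightarrow> \<forall>j<n. (\<Sum>i<n. L i j) = s \<Longrightarrow> 0 \<le> s \<Longrightarrow>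
    \<exists>\<beta>. (\<forall>p. 0 \<le> \<beta> p) \<and> (\<Sum>p\<in>{p. p permutes {..<n}}. \<beta> p) = s \<and>
      (\<forall>i<n. \<forall>j<n. L i j = (\<Sum>p\<in>{p. p permutes {..<n}}. if p i = j then \<beta> p else 0))"
proof (induction "card {(i,j). i < n \<and> j < n \<and> L i j \<noteq> 0}" arbitrary: L s rule: less_induct)
  case less
  note nn = less.prems(1) and rows = less.prems(2) and cols = less.prems(3) and s0 = less.prems(4)
  let ?P = "{p. p permutes {..<n}}"
  have finP: "finite ?P" by (rule finite_permutations) simp
  show ?case
  proof (cases "n = 0")
    case True
    then have P: "?P = {id}" by auto
    show ?thesis by (rule exI[of _ "\<lambda>p. s"]) (use s0 P True in auto)
  next
    case npos: False
    show ?thesis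
    proof (cases "s = 0")
      case True
      have "\<forall>i<n. \<forall>j<n. L i j = 0"
      proof (intro allI impI)
        fix i j assume i: "i < n" and j: "j < n"
        have "(\<Sum>j<n. L i j) = 0" using rows i True by auto
        then show "L i j = 0" using sum_nonneg_eq_0_iff[of "{..<n}" "L i"] nn i j by auto
      qed
      then show ?thesis by (intro exI[of _ "\<lambda>p. 0"]) (auto simp: True)
    next
      case False
      then have sp: "s > 0" using s0 by simp
      obtain p where p: "p permutes {..<n}" "\<forall>i<n. L i (p i) > 0"
        using pos_diag[OF nn rows cols sp] by blast
      define t where "t = Min ((\<lambda>i. L i (p i)) ` {..<n})"
      have ne: "(\<lambda>i. L i (p i)) ` {..<n} \<noteq> {}" using npos by auto
      obtain i0 where i0: "i0 < n" "t = L i0 (p i0)"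
        using Min_in[OF _ ne] unfolding t_def by auto
      have tle: "\<And>i. i < n \<Longrightarrow> t \<le> L i (p i)" unfolding t_def by (rule Min_le) auto
      have tpos: "t > 0" using p(2) i0 by auto
      have pin: "\<And>i. i < n \<Longrightarrow> p i < n" using permutes_in_image[OF p(1)] by auto
      have "t \<le> (\<Sum>j<n. L i0 j)"
        using i0 member_le_sum[of "p i0" "{..<n}" "L i0"] nn pin[OF i0(1)] by auto
      then have ts: "t \<le> s" using rows i0 by auto
      define L' where "L' = (\<lambda>i j. L i j - (if p i = j then t else 0))"
      have nn': "\<forall>i<n. \<forall>j<n. 0 \<le> L' i j" using nn tle unfolding L'_def by auto
      have rows': "\<forall>i<n. (\<Sum>j<n. L' i j) = s - t"
      proof (intro allI impI)
        fix i assume i: "i < n"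
        have "(\<Sum>j<n. L' i j) = (\<Sum>j<n. L i j) - (\<Sum>j<n. if p i = j then t else 0)"
          unfolding L'_def by (simp add: sum_subtractf)
        also have "(\<Sum>j<n. if p i = j then t else 0) = t" using pin[OF i] by simp
        finally show "(\<Sum>j<n. L' i j) = s - t" using rows i by simp
      qed
      have cols': "\<forall>j<n. (\<Sum>i<n. L' i j) = s - t"
      proof (intro allI impI)
        fix j assume j: "j < n"
        have "(\<Sum>i<n. L' i j) = (\<Sum>i<n. L i j) - (\<Sum>i<n. if p i = j then t else 0)"
          unfolding L'_def by (simp add: sum_subtractf)
        also have "(\<Sum>i<n. if p i = j then t else 0) = (\<Sum>k<n. if k = j then t else 0)"
          using sum_permutes_reindex[OF p(1), of "\<lambda>k. if k = j then t else 0"] by simp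
        also have "\<dots> = t" using j by simp
        finally show "(\<Sum>i<n. L' i j) = s - t" using cols j by simp
      qed
      have sub: "{(i,j). i < n \<and> j < n \<and> L' i j \<noteq> 0} \<subset> {(i,j). i < n \<and> j < n \<and> L i j \<noteq> 0}"
      proof
        show "{(i,j). i < n \<and> j < n \<and> L' i j \<noteq> 0} \<subseteq> {(i,j). i < n \<and> j < n \<and> L i j \<noteq> 0}"
          using p(2) unfolding L'_def by auto
        have "(i0, p i0) \<in> {(i,j). i < n \<and> j < n \<and> L i j \<noteq> 0}" using i0 p(2) pin by auto
        moreover have "(i0, p i0) \<notin> {(i,j). i < n \<and> j < n \<and> L' i j \<noteq> 0}"
          using i0 unfolding L'_def by auto
        ultimately show "{(i,j). i < n \<and> j < n \<and> L' i j \<noteq> 0} \<noteq> {(i,j). i < n \<and> j < n \<and> L i j \<noteq> 0}"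
          by blast
      qed
      have fin: "finite {(i,j). i < n \<and> j < n \<and> L i j \<noteq> 0}"
        by (rule finite_subset[of _ "{..<n} \<times> {..<n}"]) auto
      have "card {(i,j). i < n \<and> j < n \<and> L' i j \<noteq> 0} < card {(i,j). i < n \<and> j < n \<and> L i j \<noteq> 0}"
        by (rule psubset_card_mono[OF fin sub])
      then obtain \<beta>' where b': "\<forall>p. 0 \<le> \<beta>' p" "(\<Sum>p\<in>?P. \<beta>' p) = s - t"
        "\<forall>i<n. \<forall>j<n. L' i j = (\<Sum>q\<in>?P. if q i = j then \<beta>' q else 0)"
        using less.hyps[OF _ nn' rows' cols'] ts by auto
      define \<beta> where "\<beta> = (\<lambda>q. \<beta>' q + (if q = p then t else 0))"
      have "\<forall>q. 0 \<le> \<beta> q" using b'(1) tpos unfolding \<beta>_def by auto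
      moreover have "(\<Sum>q\<in>?P. \<beta> q) = s"
        unfolding \<beta>_def using b'(2) p(1) finP by (simp add: sum.distrib)
      moreover have "\<forall>i<n. \<forall>j<n. L i j = (\<Sum>q\<in>?P. if q i = j then \<beta> q else 0)"
      proof (intro allI impI)
        fix i j assume ij: "i < n" "j < n"
        have "(\<Sum>q\<in>?P. if q i = j then \<beta> q else 0) =
          (\<Sum>q\<in>?P. (if q i = j then \<beta>' q else 0) + (if q = p then (if p i = j then t else 0) else 0))"
          unfolding \<beta>_def by (rule sum.cong) auto
        also have "\<dots> = (\<Sum>q\<in>?P. if q i = j then \<beta>' q else 0) + (if p i = j then t else 0)"
          using p(1) finP by (simp add: sum.distrib)
        also have "\<dots> = L' i j + (if p i = j then t else 0)" using b'(3) ij by simp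
        also have "\<dots> = L i j" unfolding L'_def by simp
        finally show "L i j = (\<Sum>q\<in>?P. if q i = j then \<beta> q else 0)" by simp
      qed
      ultimately show ?thesis by blast
    qed
  qed
qed

lemma birkhoff:
  assumes "doubly_stochastic n L"
  shows "\<exists>\<beta>. (\<forall>p. 0 \<le> \<beta> p) \<and> (\<Sum>p\<in>{p. p permutes {..<n}}. \<beta> p) = 1 \<and>
      (\<forall>i<n. \<forall>j<n. L i j = (\<Sum>p\<in>{p. p permutes {..<n}}. if p i = j then \<beta> p else 0))"
  using assms unfolding doubly_stochastic_def by (intro birkhoff_gen) auto

context prob_space
begin

lemma atomless_small:
  assumes al: "atomless M" and A: "A \<in> sets M" "measure M A > 0" and e: "e > 0"
  shows "\<exists>B\<in>sets M. B \<subseteq> A \<and> 0 < measure M B \<and> measure M B < e"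
proof -
  have "\<exists>B\<in>sets M. B \<subseteq> A \<and> 0 < measure M B \<and> measure M B \<le> measure M A / 2^k" for k
  proof (induction k)
    case 0 then show ?case using A by auto
  next
    case (Suc k)
    then obtain B where B: "B \<in> sets M" "B \<subseteq> A" "0 < measure M B" "measure M B \<le> measure M A / 2^k" by auto
    obtain C where C: "C \<in> sets M" "C \<subseteq> B" "0 < measure M C" "measure M C < measure M B"
      using al B unfolding atomless_def by blast
    have d: "measure M (B - C) = measure M B - measure M C"
      using C B by (simp add: finite_measure_Diff)
    show ?case
    proof (cases "measure M C \<le> measure M B / 2")
      case True then show ?thesis using C B by (intro bexI[of _ C]) auto
    next
      case False then show ?thesis using C B d by (intro bexI[of _ "B - C"]) auto
    qed
  qed
  moreover obtain k where "measure M A / e < 2 ^ k"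
    using real_arch_pow[of 2 "measure M A / e"] by auto
  then have "measure M A / 2^k < e" using e by (simp add: field_simps)
  ultimately show ?thesis by (meson le_less_trans)
qed

lemma atomless_sierpinski:
  assumes al: "atomless M" and A: "A \<in> sets M" and a: "0 \<le> a" "a \<le> measure M A"
  shows "\<exists>B\<in>sets M. B \<subseteq> A \<and> measure M B = a"
proof -
  define adm where "adm = (\<lambda>D C. C \<in> sets M \<and> C \<subseteq> A - D \<and> measure M D + measure M C \<le> a)"
  define s where "s = (\<lambda>D. Sup {measure M C | C. adm D C})"
  define PP where "PP = (\<lambda>(n::nat) D. D \<in> sets M \<and> D \<subseteq> A \<and> measure M D \<le> a)"
  define QQ where "QQ = (\<lambda>(n::nat) D D'. \<exists>C. adm D C \<and> s D / 2 \<le> measure M C \<and> D' = D \<union> C)"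
  have bdd: "bdd_above {measure M C | C. adm D C}" for D
    by (rule bdd_aboveI[of _ 1]) (auto simp: adm_def)
  have step: "\<exists>D'. PP (Suc n) D' \<and> QQ n D D'" if "PP n D" for n D
  proof -
    have D: "D \<in> sets M" "D \<subseteq> A" "measure M D \<le> a" using that PP_def by auto
    have ne: "{measure M C | C. adm D C} \<noteq> {}" using D a unfolding adm_def by (auto intro!: exI[of _ "{}"])
    have "\<exists>C. adm D C \<and> s D / 2 \<le> measure M C"
    proof (cases "s D \<le> 0")
      case True then show ?thesis using D unfolding adm_def by (intro exI[of _ "{}"]) auto
    next
      case False
      then have "s D / 2 < Sup {measure M C | C. adm D C}" unfolding s_def by simp
      then obtain x where "x \<in> {measure M C | C. adm D C}" "s D / 2 < x"
        using less_cSup_iff[OF ne bdd] by blast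
      then show ?thesis by (auto intro: less_imp_le)
    qed
    then obtain C where C: "adm D C" "s D / 2 \<le> measure M C" by blast
    have "D \<union> C \<in> sets M" "D \<union> C \<subseteq> A" using C D unfolding adm_def by auto
    moreover have "measure M (D \<union> C) = measure M D + measure M C"
      using C D unfolding adm_def by (intro finite_measure_Union) auto
    ultimately have "PP (Suc n) (D \<union> C)" using C unfolding PP_def adm_def by auto
    then show ?thesis using C unfolding QQ_def by blast
  qed
  have "PP 0 {}" unfolding PP_def using a by auto
  then obtain D where D: "\<And>n. PP n (D n)" "\<And>n. QQ n (D n) (D (Suc n))"
    using dependent_nat_choice[of PP QQ] step by metis
  have Dsets: "range D \<subseteq> sets M" using D(1) unfolding PP_def by auto
  have inc: "incseq D" using D(2) unfolding QQ_def by (intro incseq_SucI) auto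
  define B where "B = (\<Union>n. D n)"
  have lim: "(\<lambda>n. measure M (D n)) \<longlonglongrightarrow> measure M B"
    unfolding B_def by (rule finite_Lim_measure_incseq[OF Dsets inc])
  have Bsets: "B \<in> sets M" using Dsets unfolding B_def by auto
  have BA: "B \<subseteq> A" using D(1) unfolding B_def PP_def by auto
  have Ble: "measure M B \<le> a"
    using D(1) unfolding PP_def by (intro LIMSEQ_le_const2[OF lim]) auto
  have "measure M B = a"
  proof (rule ccontr)
    assume "measure M B \<noteq> a"
    then have lt: "measure M B < a" using Ble by simp
    have "measure M (A - B) = measure M A - measure M B"
      using Bsets BA A by (simp add: finite_measure_Diff)
    then have pos: "measure M (A - B) > 0" using lt a by simp
    obtain C where C: "C \<in> sets M" "C \<subseteq> A - B" "0 < measure M C" "measure M C < a - measure M B"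
      using atomless_small[OF al _ pos, of "a - measure M B"] A Bsets lt by auto
    have big: "measure M C / 2 \<le> measure M (D (Suc n)) - measure M (D n)" for n
    proof -
      have DnB: "D n \<subseteq> B" unfolding B_def by auto
      have "measure M (D n) \<le> measure M B" using DnB Bsets Dsets by (intro finite_measure_mono) auto
      then have "adm (D n) C" using C DnB unfolding adm_def by auto
      then have "measure M C \<le> s (D n)" unfolding s_def by (intro cSup_upper[OF _ bdd]) auto
      moreover obtain C' where C': "adm (D n) C'" "s (D n) / 2 \<le> measure M C'" "D (Suc n) = D n \<union> C'"
        using D(2)[of n] unfolding QQ_def by auto
      moreover have "measure M (D n \<union> C') = measure M (D n) + measure M C'"
        using C' Dsets unfolding adm_def by (intro finite_measure_Union) auto
      ultimately show ?thesis by simp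
    qed
    have "(\<lambda>n. measure M (D (Suc n)) - measure M (D n)) \<longlonglongrightarrow> measure M B - measure M B"
      by (intro tendsto_diff LIMSEQ_Suc lim)
    then have "(\<lambda>n. measure M (D (Suc n)) - measure M (D n)) \<longlonglongrightarrow> 0" by simp
    then have "measure M C / 2 \<le> 0"
      using big by (intro LIMSEQ_le_const[of _ 0]) auto
    then show False using C by simp
  qed
  then show ?thesis using Bsets BA by blast
qed

end

context prob_space
begin

lemma atomless_split:
  assumes al: "atomless M"
  shows "finite J \<Longrightarrow> J \<noteq> {} \<Longrightarrow> A \<in> sets M \<Longrightarrow> \<forall>j\<in>J. 0 \<le> q j \<Longrightarrow> (\<Sum>j\<in>J. q j) = measure M A \<Longrightarrow>
    \<exists>B. (\<forall>j\<in>J. B j \<in> sets M \<and> B j \<subseteq> A \<and> measure M (B j) = q j) \<and> disjoint_family_on B J \<and> (\<Union>j\<in>J. B j) = A"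
proof (induction J arbitrary: A rule: finite_ne_induct)
  case (singleton j)
  then show ?case by (intro exI[of _ "\<lambda>_. A"]) (auto simp: disjoint_family_on_def)
next
  case (insert j J)
  have qj: "0 \<le> q j" using insert by auto
  have sJ: "0 \<le> (\<Sum>j\<in>J. q j)" using insert by (intro sum_nonneg) auto
  have tot: "q j + (\<Sum>j\<in>J. q j) = measure M A" using insert by simp
  obtain C where C: "C \<in> sets M" "C \<subseteq> A" "measure M C = q j"
    using atomless_sierpinski[OF al insert.prems(1) qj] tot sJ by auto
  have mA': "measure M (A - C) = (\<Sum>j\<in>J. q j)"
    using C insert.prems(1) tot by (simp add: finite_measure_Diff)
  obtain B' where B': "\<forall>k\<in>J. B' k \<in> sets M \<and> B' k \<subseteq> A - C \<and> measure M (B' k) = q k"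
    "disjoint_family_on B' J" "(\<Union>k\<in>J. B' k) = A - C"
    using insert.IH[of "A - C"] insert.prems C mA' by auto
  define B where "B = B'(j := C)"
  have "\<forall>k\<in>insert j J. B k \<in> sets M \<and> B k \<subseteq> A \<and> measure M (B k) = q k"
    using B' C insert.hyps unfolding B_def by auto
  moreover have "disjoint_family_on B (insert j J)"
    using B' insert.hyps unfolding B_def disjoint_family_on_def by (auto; blast)
  moreover have "(\<Union>k\<in>insert j J. B k) = A"
  proof -
    have "(\<Union>k\<in>insert j J. B k) = C \<union> (\<Union>k\<in>J. B' k)" unfolding B_def using insert.hyps by auto
    then show ?thesis using B'(3) C by auto
  qed
  ultimately show ?case by blast
qed

lemma atomless_realize:
  fixes K :: "nat \<Rightarrow> 'b set" and p :: "nat \<Rightarrow> 'b \<Rightarrow> real" and \<pi> :: "nat \<Rightarrow> 'b \<Rightarrow> 'b"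
  assumes al: "atomless M" and finK: "\<And>L. finite (K L)" and pnn: "\<And>L b. b \<in> K L \<Longrightarrow> 0 \<le> p L b"
    and p0: "(\<Sum>b\<in>K 0. p 0 b) = 1"
    and \<pi>K: "\<And>L b. b \<in> K (Suc L) \<Longrightarrow> \<pi> L b \<in> K L"
    and \<pi>surj: "\<And>L a. a \<in> K L \<Longrightarrow> \<exists>b\<in>K (Suc L). \<pi> L b = a"
    and cons: "\<And>L a. a \<in> K L \<Longrightarrow> p L a = (\<Sum>b\<in>{b\<in>K (Suc L). \<pi> L b = a}. p (Suc L) b)"
  shows "\<exists>A. \<forall>L. (\<forall>b\<in>K L. A L b \<in> sets M \<and> measure M (A L b) = p L b) \<and>
     disjoint_family_on (A L) (K L) \<and> (\<Union>b\<in>K L. A L b) = space M \<and>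
     (\<forall>b\<in>K (Suc L). A (Suc L) b \<subseteq> A L (\<pi> L b))"
proof -
  define PP where "PP = (\<lambda>L (A :: 'b \<Rightarrow> 'a set). (\<forall>b\<in>K L. A b \<in> sets M \<and> measure M (A b) = p L b) \<and>
     disjoint_family_on A (K L) \<and> (\<Union>b\<in>K L. A b) = space M)"
  define QQ where "QQ = (\<lambda>L (A :: 'b \<Rightarrow> 'a set) A'. \<forall>b\<in>K (Suc L). A' b \<subseteq> A (\<pi> L b))"
  have "K 0 \<noteq> {}" using p0 by auto
  then obtain A0 where A0: "\<forall>j\<in>K 0. A0 j \<in> sets M \<and> A0 j \<subseteq> space M \<and> measure M (A0 j) = p 0 j"
    "disjoint_family_on A0 (K 0)" "(\<Union>j\<in>K 0. A0 j) = space M"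
    using atomless_split[OF al finK, of 0 "space M" "p 0"] pnn p0 prob_space by auto
  then have PP0: "PP 0 A0" unfolding PP_def by auto
  have step: "\<exists>A'. PP (Suc L) A' \<and> QQ L A A'" if PA: "PP L A" for L A
  proof -
    define J where "J = (\<lambda>a. {b\<in>K (Suc L). \<pi> L b = a})"
    have "\<forall>a\<in>K L. \<exists>B. (\<forall>j\<in>J a. B j \<in> sets M \<and> B j \<subseteq> A a \<and> measure M (B j) = p (Suc L) j) \<and>
        disjoint_family_on B (J a) \<and> (\<Union>j\<in>J a. B j) = A a"
    proof
      fix a assume a: "a \<in> K L"
      show "\<exists>B. (\<forall>j\<in>J a. B j \<in> sets M \<and> B j \<subseteq> A a \<and> measure M (B j) = p (Suc L) j) \<and>
        disjoint_family_on B (J a) \<and> (\<Union>j\<in>J a. B j) = A a"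
      proof (rule atomless_split[OF al])
        show "finite (J a)" unfolding J_def using finK by auto
        show "J a \<noteq> {}" unfolding J_def using \<pi>surj[OF a] by auto
        show "A a \<in> sets M" using PA a unfolding PP_def by auto
        show "\<forall>j\<in>J a. 0 \<le> p (Suc L) j" unfolding J_def using pnn by auto
        show "(\<Sum>j\<in>J a. p (Suc L) j) = measure M (A a)"
          using cons[OF a] PA a unfolding PP_def J_def by auto
      qed
    qed
    then obtain BB where BB: "\<forall>a\<in>K L. (\<forall>j\<in>J a. BB a j \<in> sets M \<and> BB a j \<subseteq> A a \<and> measure M (BB a j) = p (Suc L) j) \<and>
        disjoint_family_on (BB a) (J a) \<and> (\<Union>j\<in>J a. BB a j) = A a"
      by metis
    define A' where "A' = (\<lambda>b. BB (\<pi> L b) b)"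
    have inJ: "b \<in> K (Suc L) \<Longrightarrow> b \<in> J (\<pi> L b)" for b unfolding J_def by auto
    have P1: "\<forall>b\<in>K (Suc L). A' b \<in> sets M \<and> measure M (A' b) = p (Suc L) b"
      using BB inJ \<pi>K unfolding A'_def by blast
    have sub: "\<forall>b\<in>K (Suc L). A' b \<subseteq> A (\<pi> L b)"
      using BB inJ \<pi>K unfolding A'_def by blast
    have P2: "disjoint_family_on A' (K (Suc L))"
    proof (unfold disjoint_family_on_def, intro ballI impI)
      fix b b' assume b: "b \<in> K (Suc L)" "b' \<in> K (Suc L)" "b \<noteq> b'"
      show "A' b \<inter> A' b' = {}"
      proof (cases "\<pi> L b = \<pi> L b'")
        case True
        then have "disjoint_family_on (BB (\<pi> L b)) (J (\<pi> L b))" using BB \<pi>K b by blast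
        moreover have "b' \<in> J (\<pi> L b)" using True inJ b by auto
        moreover have "b \<in> J (\<pi> L b)" using inJ b by auto
        ultimately show ?thesis using b True unfolding A'_def disjoint_family_on_def by metis
      next
        case False
        have "A (\<pi> L b) \<inter> A (\<pi> L b') = {}"
          using PA False \<pi>K b unfolding PP_def disjoint_family_on_def by blast
        then show ?thesis using sub b by blast
      qed
    qed
    have P3: "(\<Union>b\<in>K (Suc L). A' b) = space M"
    proof
      show "(\<Union>b\<in>K (Suc L). A' b) \<subseteq> space M"
        using sub PA \<pi>K unfolding PP_def by blast
      show "space M \<subseteq> (\<Union>b\<in>K (Suc L). A' b)"
      proof
        fix x assume "x \<in> space M"
        then obtain a where a: "a \<in> K L" "x \<in> A a" using PA unfolding PP_def by auto
        then obtain j where j: "j \<in> J a" "x \<in> BB a j" using BB by blast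
        then have "j \<in> K (Suc L)" "\<pi> L j = a" unfolding J_def by auto
        then show "x \<in> (\<Union>b\<in>K (Suc L). A' b)" using j unfolding A'_def by auto
      qed
    qed
    show ?thesis using P1 P2 P3 sub unfolding PP_def QQ_def by blast
  qed
  obtain A where "\<And>L. PP L (A L)" "\<And>L. QQ L (A L) (A (Suc L))"
    using dependent_nat_choice[of PP QQ] PP0 step by metis
  then show ?thesis unfolding PP_def QQ_def by blast
qed

end

type_synonym atm = "(int list \<times> nat list \<times> int list) option"

definition fl :: "nat \<Rightarrow> real \<Rightarrow> int" where "fl L y = \<lfloor>y * 2^L\<rfloor>"
definition inb :: "nat \<Rightarrow> real \<Rightarrow> bool" where "inb L y \<longleftrightarrow> - real L \<le> y \<and> y < real L"
definition bnd :: "nat \<Rightarrow> int \<Rightarrow> bool" where "bnd L z \<longleftrightarrow> - (int L * 2^L) \<le> z \<and> z < int L * 2^L"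

definition atom :: "nat \<Rightarrow> nat \<Rightarrow> (nat \<Rightarrow> real) \<Rightarrow> (nat \<Rightarrow> nat) \<Rightarrow> (nat \<Rightarrow> real) \<Rightarrow> atm" where
  "atom n L x p c = (if \<forall>i<n. inb L (x i) \<and> inb L (c i)
     then Some (map (\<lambda>i. fl L (x i)) [0..<n], map p [0..<n], map (\<lambda>i. fl L (c i)) [0..<n]) else None)"

definition proj :: "nat \<Rightarrow> atm \<Rightarrow> atm" where
  "proj L b = (case b of None \<Rightarrow> None | Some (g, s, h) \<Rightarrow>
     if (\<forall>z\<in>set g. bnd L (z div 2)) \<and> (\<forall>z\<in>set h. bnd L (z div 2))
     then Some (map (\<lambda>z. z div 2) g, s, map (\<lambda>z. z div 2) h) else None)"

definition KK :: "nat \<Rightarrow> nat \<Rightarrow> atm set" where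
  "KK n L = insert None (Some ` ({g. set g \<subseteq> {z. bnd L z} \<and> length g = n} \<times>
     {s. set s \<subseteq> {..<n} \<and> length s = n} \<times> {h. set h \<subseteq> {z. bnd L z} \<and> length h = n}))"

definition val :: "nat \<Rightarrow> nat \<Rightarrow> atm \<Rightarrow> real" where
  "val L i b = (case b of None \<Rightarrow> 0 | Some (g, s, h) \<Rightarrow> (of_int (g ! (s ! i)) + of_int (h ! i)) / 2^L)"

lemma inb_bnd: "inb L y \<longleftrightarrow> bnd L (fl L y)"
proof -
  have "- (int L * 2^L) \<le> \<lfloor>y * 2^L\<rfloor> \<longleftrightarrow> - real L \<le> y"
  proof -
    have "- (int L * 2^L) \<le> \<lfloor>y * 2^L\<rfloor> \<longleftrightarrow> of_int (- (int L * 2^L)) \<le> y * 2^L" by (rule le_floor_iff)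
    also have "\<dots> \<longleftrightarrow> (- real L) * 2^L \<le> y * 2^L" by simp
    also have "\<dots> \<longleftrightarrow> - real L \<le> y" by (rule mult_le_cancel_right_pos) simp
    finally show ?thesis .
  qed
  moreover have "\<lfloor>y * 2^L\<rfloor> < int L * 2^L \<longleftrightarrow> y < real L"
  proof -
    have "\<lfloor>y * 2^L\<rfloor> < int L * 2^L \<longleftrightarrow> y * 2^L < of_int (int L * 2^L)" by (rule floor_less_iff)
    also have "\<dots> \<longleftrightarrow> y * 2^L < real L * 2^L" by simp
    also have "\<dots> \<longleftrightarrow> y < real L" by (rule mult_less_cancel_right_pos) simp
    finally show ?thesis .
  qed
  ultimately show ?thesis unfolding inb_def bnd_def fl_def by auto
qed

lemma fl_Suc: "fl (Suc L) y div 2 = fl L y"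
proof -
  define z where "z = fl L y"
  define z' where "z' = fl (Suc L) y"
  have "of_int z \<le> y * 2^L" "y * 2^L < of_int z + 1" unfolding z_def fl_def by linarith+
  then have a: "of_int (2*z) \<le> y * 2^Suc L" "y * 2^Suc L < of_int (2*z) + 2" by auto
  have "of_int z' \<le> y * 2^Suc L" "y * 2^Suc L < of_int z' + 1" unfolding z'_def fl_def by linarith+
  have "2*z \<le> z'" unfolding z'_def fl_def using a(1) by (simp only: le_floor_iff)
  moreover have "z' < 2*z + 2"
  proof -
    have "real_of_int z' < real_of_int (2*z + 2)" using a(2) \<open>of_int z' \<le> y * 2^Suc L\<close> by simp
    then show ?thesis by (simp only: of_int_less_iff)
  qed
  ultimately have "2*z \<le> z'" "z' \<le> 2*z+1" by auto
  then have "z' div 2 = z" by presburger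
  then show ?thesis unfolding z_def z'_def .
qed

lemma fl_le: "of_int (fl L y) / 2^L \<le> y" and fl_gt: "y < of_int (fl L y) / 2^L + 1 / 2^L"
proof -
  have "of_int (fl L y) \<le> y * 2^L" "y * 2^L < of_int (fl L y) + 1" unfolding fl_def by linarith+
  then show "of_int (fl L y) / 2^L \<le> y" "y < of_int (fl L y) / 2^L + 1 / 2^L"
    by (simp_all add: field_simps)
qed

lemma inb_Suc: "inb L y \<Longrightarrow> inb (Suc L) y" unfolding inb_def by auto

lemma atom_proj: "atom n L x p c = proj L (atom n (Suc L) x p c)"
proof (cases "\<forall>i<n. inb (Suc L) (x i) \<and> inb (Suc L) (c i)")
  case False
  then have "\<not> (\<forall>i<n. inb L (x i) \<and> inb L (c i))" using inb_Suc by blast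
  then show ?thesis using False unfolding atom_def proj_def by auto
next
  case True
  define G' where "G' = map (\<lambda>i. fl (Suc L) (x i)) [0..<n]"
  define H' where "H' = map (\<lambda>i. fl (Suc L) (c i)) [0..<n]"
  have A1: "atom n (Suc L) x p c = Some (G', map p [0..<n], H')"
    using True unfolding atom_def G'_def H'_def by simp
  have eq: "((\<forall>z\<in>set G'. bnd L (z div 2)) \<and> (\<forall>z\<in>set H'. bnd L (z div 2))) \<longleftrightarrow>
            (\<forall>i<n. inb L (x i) \<and> inb L (c i))"
    unfolding G'_def H'_def by (auto simp: fl_Suc inb_bnd)
  have mG: "map (\<lambda>z. z div 2) G' = map (\<lambda>i. fl L (x i)) [0..<n]" unfolding G'_def by (simp add: fl_Suc)
  have mH: "map (\<lambda>z. z div 2) H' = map (\<lambda>i. fl L (c i)) [0..<n]" unfolding H'_def by (simp add: fl_Suc)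
  have "proj L (atom n (Suc L) x p c) = (if (\<forall>z\<in>set G'. bnd L (z div 2)) \<and> (\<forall>z\<in>set H'. bnd L (z div 2))
     then Some (map (\<lambda>z. z div 2) G', map p [0..<n], map (\<lambda>z. z div 2) H') else None)"
    unfolding A1 proj_def by simp
  also have "\<dots> = atom n L x p c" unfolding eq mG mH atom_def by simp
  finally show ?thesis by simp
qed

lemma finite_bnd: "finite {z. bnd L z}"
proof -
  have "{z. bnd L z} = {- (int L * 2^L)..< int L * 2^L}" unfolding bnd_def by auto
  then show ?thesis by simp
qed

lemma finite_KK: "finite (KK n L)"
  unfolding KK_def
  by (intro finite_insert[THEN iffD2] finite_imageI finite_cartesian_product finite_lists_length_eq
      finite_bnd finite_lessThan)

lemma atom_KK: "(\<And>i. i < n \<Longrightarrow> p i < n) \<Longrightarrow> atom n L x p c \<in> KK n L"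
  unfolding atom_def KK_def by (auto simp: inb_bnd image_iff)

lemma proj_KK: assumes "b \<in> KK n (Suc L)" shows "proj L b \<in> KK n L"
proof (cases b)
  case None then show ?thesis by (simp add: proj_def KK_def)
next
  case (Some t)
  then obtain g s h where b: "b = Some (g, s, h)" by (cases t) auto
  then have g: "length g = n" and s: "set s \<subseteq> {..<n}" "length s = n" and h: "length h = n"
    using assms unfolding KK_def by auto
  show ?thesis
  proof (cases "(\<forall>z\<in>set g. bnd L (z div 2)) \<and> (\<forall>z\<in>set h. bnd L (z div 2))")
    case True
    then have "proj L b = Some (map (\<lambda>z. z div 2) g, s, map (\<lambda>z. z div 2) h)" unfolding proj_def b by simp
    moreover have "(map (\<lambda>z. z div 2) g, s, map (\<lambda>z. z div 2) h) \<in>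
      {g. set g \<subseteq> {z. bnd L z} \<and> length g = n} \<times> {s. set s \<subseteq> {..<n} \<and> length s = n} \<times>
      {h. set h \<subseteq> {z. bnd L z} \<and> length h = n}" using True g s h by auto
    ultimately show ?thesis unfolding KK_def by blast
  next
    case False
    then have "proj L b = None" unfolding proj_def b by auto
    then show ?thesis unfolding KK_def by simp
  qed
qed

lemma proj_surj: "a \<in> KK n L \<Longrightarrow> \<exists>b\<in>KK n (Suc L). proj L b = a"
proof (cases a)
  case None
  then show ?thesis by (intro bexI[of _ None]) (auto simp: KK_def proj_def)
next
  case (Some t)
  then obtain g s h where a: "a = Some (g, s, h)" by (cases t) auto
  assume aK: "a \<in> KK n L"
  then have g: "length g = n" "set g \<subseteq> {z. bnd L z}" and s: "length s = n" "set s \<subseteq> {..<n}"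
    and h: "length h = n" "set h \<subseteq> {z. bnd L z}" using a unfolding KK_def by auto
  have b2: "bnd L z \<Longrightarrow> bnd (Suc L) (2 * z)" for z
  proof -
    assume "bnd L z"
    then have z: "- (int L * 2^L) \<le> z" "z < int L * 2^L" unfolding bnd_def by auto
    have e: "int (Suc L) * 2^Suc L = 2 * (int L * 2^L) + 2 * 2^L" by (simp add: algebra_simps)
    have "(0::int) \<le> 2 * 2^L" by simp
    then have "- (int (Suc L) * 2^Suc L) \<le> 2 * z" "2 * z < int (Suc L) * 2^Suc L"
      unfolding e using z by linarith+
    then show "bnd (Suc L) (2 * z)" unfolding bnd_def by blast
  qed
  let ?b = "Some (map (\<lambda>z. 2 * z) g, s, map (\<lambda>z. 2 * z) h)"
  have "(map (\<lambda>z. 2 * z) g, s, map (\<lambda>z. 2 * z) h) \<in>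
      {g. set g \<subseteq> {z. bnd (Suc L) z} \<and> length g = n} \<times> {s. set s \<subseteq> {..<n} \<and> length s = n} \<times>
      {h. set h \<subseteq> {z. bnd (Suc L) z} \<and> length h = n}"
    using g s h b2 by (auto simp del: mult_2)
  then have "?b \<in> KK n (Suc L)" unfolding KK_def by blast
  moreover have "proj L ?b = a"
  proof -
    have d: "(2 * z) div 2 = (z::int)" for z by simp
    have c: "(\<forall>z\<in>set (map (\<lambda>z. 2 * z) g). bnd L (z div 2)) \<and> (\<forall>z\<in>set (map (\<lambda>z. 2 * z) h). bnd L (z div 2))"
      using g h by (auto simp only: set_map d image_iff subset_iff mem_Collect_eq)
    have m: "map (\<lambda>z. z div 2) (map (\<lambda>z. 2 * z) g) = g" "map (\<lambda>z. z div 2) (map (\<lambda>z. 2 * z) h) = h"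
      by (simp_all only: map_map o_def d map_ident)
    show ?thesis unfolding proj_def a using c m by simp
  qed
  ultimately show ?thesis by blast
qed


lemma val_atom:
  assumes "atom n L x p c = Some t" "i < n" "p i < n"
  shows "val L i (atom n L x p c) = (of_int (fl L (x (p i))) + of_int (fl L (c i))) / 2^L"
  using assms unfolding atom_def val_def by (auto split: if_splits)

lemma val_proj:
  assumes b: "b \<in> KK n (Suc L)" and pb: "proj L b \<noteq> None" and i: "i < n"
  shows "val L i (proj L b) \<le> val (Suc L) i b" "val (Suc L) i b \<le> val L i (proj L b) + 1 / 2^L"
proof -
  obtain g s h where bs: "b = Some (g, s, h)" using pb unfolding proj_def by (cases b) (auto split: option.splits)
  have g: "length g = n" and s: "length s = n" "set s \<subseteq> {..<n}" and h: "length h = n"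
    using b bs unfolding KK_def by auto
  have si: "s ! i < n" using s i by (auto simp: subset_iff)
  have pj: "proj L b = Some (map (\<lambda>z. z div 2) g, s, map (\<lambda>z. z div 2) h)"
    using pb unfolding proj_def bs by (auto split: if_splits)
  define u where "u = g ! (s ! i)"
  define v where "v = h ! i"
  have v1: "val L i (proj L b) = (of_int (u div 2) + of_int (v div 2)) / 2^L"
    unfolding pj val_def u_def v_def using g h si i by simp
  have v2: "val (Suc L) i b = (of_int u + of_int v) / 2^Suc L"
    unfolding bs val_def u_def v_def by simp
  have "2 * (u div 2) \<le> u" "u \<le> 2 * (u div 2) + 1" "2 * (v div 2) \<le> v" "v \<le> 2 * (v div 2) + 1"
    by presburger+
  then have r: "real_of_int (2 * (u div 2)) \<le> of_int u" "of_int u \<le> real_of_int (2 * (u div 2) + 1)"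
    "real_of_int (2 * (v div 2)) \<le> of_int v" "of_int v \<le> real_of_int (2 * (v div 2) + 1)"
    by linarith+
  define P where "P = (2::real)^L"
  have P: "P > 0" unfolding P_def by simp
  have v2': "val (Suc L) i b = ((of_int u + of_int v) / 2) / P" unfolding v2 P_def by simp
  have v1': "val L i (proj L b) = (of_int (u div 2) + of_int (v div 2)) / P" unfolding v1 P_def by simp
  have a1: "of_int (u div 2) + of_int (v div 2) \<le> (of_int u + of_int v) / (2::real)" using r by simp
  have a2: "(of_int u + of_int v) / (2::real) \<le> (of_int (u div 2) + of_int (v div 2)) + 1" using r by simp
  show "val L i (proj L b) \<le> val (Suc L) i b"
    unfolding v1' v2' using a1 P by (intro divide_right_mono) auto
  have "val (Suc L) i b \<le> ((of_int (u div 2) + of_int (v div 2)) + 1) / P"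
    unfolding v2' using a2 P by (intro divide_right_mono) auto
  also have "\<dots> = val L i (proj L b) + 1 / P" unfolding v1' by (simp add: add_divide_distrib)
  finally show "val (Suc L) i b \<le> val L i (proj L b) + 1 / 2^L" unfolding P_def .
qed

locale setting = prob_space M for M :: "'a measure" +
  fixes n :: nat and F G :: "nat \<Rightarrow> real \<Rightarrow> real" and X :: "nat \<Rightarrow> 'a \<Rightarrow> real"
    and J :: "nat \<Rightarrow> 'j set" and w :: "nat \<Rightarrow> 'j \<Rightarrow> real"
    and pm :: "nat \<Rightarrow> 'j \<Rightarrow> nat \<Rightarrow> nat" and sh :: "nat \<Rightarrow> 'j \<Rightarrow> nat \<Rightarrow> real"
  assumes al: "atomless M"
    and Fcdf: "\<And>i. i < n \<Longrightarrow> is_cdf (F i)"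
    and Gcdf: "\<And>i. i < n \<Longrightarrow> is_cdf (G i)"
    and Xm: "\<And>i. i < n \<Longrightarrow> X i \<in> borel_measurable M"
    and Xc: "\<And>i. i < n \<Longrightarrow> rv_cdf M (X i) = F i"
    and finJ: "\<And>k. finite (J k)"
    and wnn: "\<And>k j. j \<in> J k \<Longrightarrow> 0 \<le> w k j"
    and wsum: "\<And>k. (\<Sum>j\<in>J k. w k j) = 1"
    and pmp: "\<And>k j. j \<in> J k \<Longrightarrow> pm k j permutes {..<n}"
    and shs: "\<And>k j. j \<in> J k \<Longrightarrow> (\<Sum>i<n. sh k j i) = 0"
    and wc: "\<And>i. i < n \<Longrightarrow> weak_conv (\<lambda>k t. \<Sum>j\<in>J k. w k j * F (pm k j i) (t - sh k j i)) (G i)"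
begin

definition atk :: "nat \<Rightarrow> nat \<Rightarrow> 'j \<Rightarrow> 'a \<Rightarrow> atm" where
  "atk k L j \<omega> = atom n L (\<lambda>i. X i \<omega>) (pm k j) (sh k j)"

definition q :: "nat \<Rightarrow> nat \<Rightarrow> atm \<Rightarrow> real" where
  "q k L b = (\<Sum>j\<in>J k. w k j * measure M {\<omega>\<in>space M. atk k L j \<omega> = b})"

lemma pm_lt: "j \<in> J k \<Longrightarrow> i < n \<Longrightarrow> pm k j i < n"
  using permutes_in_image[OF pmp] by auto

lemma at_KK: "j \<in> J k \<Longrightarrow> atk k L j \<omega> \<in> KK n L"
  unfolding atk_def by (rule atom_KK) (rule pm_lt)

lemma fl_eq_iff: "fl L y = z \<longleftrightarrow> of_int z \<le> y * 2^L \<and> y * 2^L < of_int z + 1"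
  unfolding fl_def by (rule floor_eq_iff)

lemma at_meas: "{\<omega>\<in>space M. atk k L j \<omega> = b} \<in> sets M"
proof -
  define P where "P = (\<lambda>\<omega>. \<forall>i<n. (- real L \<le> X i \<omega> \<and> X i \<omega> < real L) \<and> inb L (sh k j i))"
  have Pm: "Measurable.pred M P" unfolding P_def using Xm by measurable
  have atP: "atk k L j \<omega> = (if P \<omega> then Some (map (\<lambda>i. fl L (X i \<omega>)) [0..<n], map (pm k j) [0..<n],
      map (\<lambda>i. fl L (sh k j i)) [0..<n]) else None)" for \<omega>
    unfolding atk_def atom_def P_def inb_def by simp
  show ?thesis
  proof (cases b)
    case None
    have "{\<omega>\<in>space M. atk k L j \<omega> = b} = {\<omega>\<in>space M. \<not> P \<omega>}" unfolding atP None by auto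
    moreover have "Measurable.pred M (\<lambda>\<omega>. \<not> P \<omega>)" using Pm by measurable
    ultimately show ?thesis by (simp add: pred_def)
  next
    case (Some t)
    then obtain g s h where b: "b = Some (g, s, h)" by (cases t) auto
    define R where "R = (\<lambda>\<omega>. P \<omega> \<and> length g = n \<and>
       (\<forall>i<n. of_int (g ! i) \<le> X i \<omega> * 2^L \<and> X i \<omega> * 2^L < of_int (g ! i) + 1) \<and>
       map (pm k j) [0..<n] = s \<and> map (\<lambda>i. fl L (sh k j i)) [0..<n] = h)"
    have Rm: "Measurable.pred M R" unfolding R_def using Xm Pm by measurable
    have "{\<omega>\<in>space M. atk k L j \<omega> = b} = {\<omega>\<in>space M. R \<omega>}"
    proof -
      have "map (\<lambda>i. fl L (X i \<omega>)) [0..<n] = g \<longleftrightarrow> length g = n \<and>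
        (\<forall>i<n. of_int (g ! i) \<le> X i \<omega> * 2^L \<and> X i \<omega> * 2^L < of_int (g ! i) + 1)" for \<omega>
        by (auto simp: list_eq_iff_nth_eq fl_eq_iff)
      then show ?thesis unfolding atP b R_def by auto
    qed
    then show ?thesis using Rm by (simp add: pred_def)
  qed
qed

lemma part_meas:
  fixes f :: "'a \<Rightarrow> atm" and K :: "atm set"
  assumes K: "finite K" and fK: "\<And>\<omega>. \<omega> \<in> space M \<Longrightarrow> f \<omega> \<in> K"
    and fm: "\<And>b. {\<omega>\<in>space M. f \<omega> = b} \<in> sets M"
  shows "measure M {\<omega>\<in>space M. \<phi> (f \<omega>)} = (\<Sum>b\<in>K. if \<phi> b then measure M {\<omega>\<in>space M. f \<omega> = b} else 0)"
proof -
  have "{\<omega>\<in>space M. \<phi> (f \<omega>)} = (\<Union>b\<in>{b\<in>K. \<phi> b}. {\<omega>\<in>space M. f \<omega> = b})" using fK by auto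
  then have "measure M {\<omega>\<in>space M. \<phi> (f \<omega>)} = (\<Sum>b\<in>{b\<in>K. \<phi> b}. measure M {\<omega>\<in>space M. f \<omega> = b})"
    using K fm by (auto intro!: finite_measure_finite_Union simp: disjoint_family_on_def)
  also have "\<dots> = (\<Sum>b\<in>K. if \<phi> b then measure M {\<omega>\<in>space M. f \<omega> = b} else 0)"
    using K by (simp add: sum.inter_filter)
  finally show ?thesis .
qed

lemma q_phi: "(\<Sum>b\<in>KK n L. if \<phi> b then q k L b else 0) =
   (\<Sum>j\<in>J k. w k j * measure M {\<omega>\<in>space M. \<phi> (atk k L j \<omega>)})"
proof -
  have "(\<Sum>b\<in>KK n L. if \<phi> b then q k L b else 0) =
    (\<Sum>b\<in>KK n L. \<Sum>j\<in>J k. w k j * (if \<phi> b then measure M {\<omega>\<in>space M. atk k L j \<omega> = b} else 0))"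
    unfolding q_def by (intro sum.cong) (auto simp: sum_distrib_left)
  also have "\<dots> = (\<Sum>j\<in>J k. w k j * (\<Sum>b\<in>KK n L. if \<phi> b then measure M {\<omega>\<in>space M. atk k L j \<omega> = b} else 0))"
    by (subst sum.swap) (simp add: sum_distrib_left)
  also have "\<dots> = (\<Sum>j\<in>J k. w k j * measure M {\<omega>\<in>space M. \<phi> (atk k L j \<omega>)})"
    by (intro sum.cong refl arg_cong2[where f="(*)"] part_meas[symmetric] finite_KK at_KK at_meas) auto
  finally show ?thesis .
qed

lemma q_nn: "0 \<le> q k L b"
  unfolding q_def using wnn by (intro sum_nonneg mult_nonneg_nonneg) auto

lemma q_sum: "(\<Sum>b\<in>KK n L. q k L b) = 1"
proof -
  have "(\<Sum>b\<in>KK n L. q k L b) = (\<Sum>b\<in>KK n L. if True then q k L b else 0)" by simp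
  also have "\<dots> = (\<Sum>j\<in>J k. w k j * measure M {\<omega>\<in>space M. True})" by (rule q_phi)
  also have "\<dots> = 1" using wsum by (simp add: prob_space)
  finally show ?thesis .
qed

lemma q_le1: "b \<in> KK n L \<Longrightarrow> q k L b \<le> 1"
  using q_sum member_le_sum[of b "KK n L" "q k L"] q_nn finite_KK by auto

lemma q_zero: "b \<notin> KK n L \<Longrightarrow> q k L b = 0"
proof -
  assume b: "b \<notin> KK n L"
  have e: "{\<omega>\<in>space M. atk k L j \<omega> = b} = {}" if "j \<in> J k" for j using at_KK[OF that] b by auto
  show ?thesis unfolding q_def by (intro sum.neutral) (simp add: e)
qed

lemma q_cons: "a \<in> KK n L \<Longrightarrow> q k L a = (\<Sum>b\<in>{b\<in>KK n (Suc L). proj L b = a}. q k (Suc L) b)"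
proof -
  assume a: "a \<in> KK n L"
  have "(\<Sum>b\<in>{b\<in>KK n (Suc L). proj L b = a}. q k (Suc L) b) = (\<Sum>b\<in>KK n (Suc L). if proj L b = a then q k (Suc L) b else 0)"
    using finite_KK by (simp add: sum.inter_filter)
  also have "\<dots> = (\<Sum>j\<in>J k. w k j * measure M {\<omega>\<in>space M. proj L (atk k (Suc L) j \<omega>) = a})" by (rule q_phi)
  also have "\<dots> = (\<Sum>j\<in>J k. w k j * measure M {\<omega>\<in>space M. atk k L j \<omega> = a})"
    unfolding atk_def atom_proj[symmetric] ..
  finally show ?thesis unfolding q_def by simp
qed

end

lemma bdd01_conv_subseq:
  fixes f :: "nat \<Rightarrow> real"
  assumes "\<And>k. f k \<in> {0..1}"
  shows "\<exists>r. strict_mono r \<and> convergent (f \<circ> r)"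
proof -
  have "compact {0..1::real}" by (rule compact_Icc)
  then have "seq_compact {0..1::real}" by (rule compact_imp_seq_compact)
  then obtain l r where "l \<in> {0..1}" "strict_mono r" "(f \<circ> r) \<longlonglongrightarrow> l"
    using assms by (metis seq_compactE)
  then show ?thesis unfolding convergent_def by blast
qed

context setting
begin

lemma q_bdd: "q k L b \<in> {0..1}"
  using q_nn q_le1 q_zero by (cases "b \<in> KK n L") auto

lemma diag_exists: "\<exists>d. strict_mono d \<and> (\<forall>L b. convergent (\<lambda>k. q (d k) L b))"
proof -
  let ?P = "\<lambda>i s. convergent (\<lambda>k. q (s k) (fst (from_nat i :: nat \<times> atm)) (snd (from_nat i :: nat \<times> atm)))"
  interpret nat: subseqs ?P
  proof (unfold subseqs_def, intro allI impI)
    fix i :: nat and s :: "nat \<Rightarrow> nat" assume s: "strict_mono s"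
    obtain s' where "strict_mono s'" "convergent ((\<lambda>k. q (s k) (fst (from_nat i :: nat \<times> atm)) (snd (from_nat i :: nat \<times> atm))) \<circ> s')"
      using bdd01_conv_subseq[of "\<lambda>k. q (s k) (fst (from_nat i :: nat \<times> atm)) (snd (from_nat i :: nat \<times> atm))"] q_bdd by blast
    then show "\<exists>s'. strict_mono s' \<and> ?P i (s \<circ> s')"
      by (intro exI[of _ s']) (simp add: comp_def)
  qed
  define d where "d = nat.diagseq"
  have subseq: "strict_mono d"
    unfolding d_def using nat.subseq_diagseq by auto
  have cnv: "?P i d" for i
  proof -
    have Pn_seqseq: "?P i (nat.seqseq (Suc i))"
      by (rule nat.seqseq_holds)
    have 1: "(\<lambda>k. q ((nat.seqseq (Suc i) \<circ> (\<lambda>k. nat.fold_reduce (Suc i) k (Suc i + k))) k)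
        (fst (from_nat i :: nat \<times> atm)) (snd (from_nat i :: nat \<times> atm))) =
      (\<lambda>k. q (nat.seqseq (Suc i) k) (fst (from_nat i :: nat \<times> atm)) (snd (from_nat i :: nat \<times> atm))) \<circ>
      (\<lambda>k. nat.fold_reduce (Suc i) k (Suc i + k))"
      by auto
    have 2: "?P i (d \<circ> ((+) (Suc i)))"
      unfolding d_def nat.diagseq_seqseq 1
      by (intro convergent_subseq_convergent Pn_seqseq nat.subseq_diagonal_rest)
    then obtain l where 3: "(\<lambda>k. q (d (k + Suc i)) (fst (from_nat i :: nat \<times> atm)) (snd (from_nat i :: nat \<times> atm))) \<longlonglongrightarrow> l"
      by (auto simp: add.commute dest: convergentD)
    then have "(\<lambda>k. q (d k) (fst (from_nat i :: nat \<times> atm)) (snd (from_nat i :: nat \<times> atm))) \<longlonglongrightarrow> l"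
      by (rule LIMSEQ_offset)
    then show ?thesis
      by (auto simp: convergent_def)
  qed
  have "convergent (\<lambda>k. q (d k) L b)" for L b
    using cnv[of "to_nat (L, b)"] by simp
  then show ?thesis using subseq by blast
qed

definition d :: "nat \<Rightarrow> nat" where
  "d = (SOME d. strict_mono d \<and> (\<forall>L b. convergent (\<lambda>k. q (d k) L b)))"

lemma d_props: "strict_mono d" "convergent (\<lambda>k. q (d k) L b)"
  using someI_ex[OF diag_exists] unfolding d_def by auto

definition ql :: "nat \<Rightarrow> atm \<Rightarrow> real" where
  "ql L b = lim (\<lambda>k. q (d k) L b)"

lemma ql_lim: "(\<lambda>k. q (d k) L b) \<longlonglongrightarrow> ql L b"
  unfolding ql_def using d_props(2) by (simp add: convergent_LIMSEQ_iff)

lemma ql_nn: "0 \<le> ql L b"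
  using ql_lim q_nn by (intro LIMSEQ_le_const[OF ql_lim]) auto

lemma ql_sum: "(\<Sum>b\<in>KK n L. ql L b) = 1"
proof -
  have "(\<lambda>k. \<Sum>b\<in>KK n L. q (d k) L b) \<longlonglongrightarrow> (\<Sum>b\<in>KK n L. ql L b)"
    by (intro tendsto_sum ql_lim)
  moreover have "(\<lambda>k. \<Sum>b\<in>KK n L. q (d k) L b) = (\<lambda>k. 1)" using q_sum by simp
  ultimately have "(\<lambda>k. 1::real) \<longlonglongrightarrow> (\<Sum>b\<in>KK n L. ql L b)" by simp
  then show ?thesis using LIMSEQ_unique[OF _ tendsto_const] by (metis (no_types))
qed

lemma ql_cons: "a \<in> KK n L \<Longrightarrow> ql L a = (\<Sum>b\<in>{b\<in>KK n (Suc L). proj L b = a}. ql (Suc L) b)"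
proof -
  assume a: "a \<in> KK n L"
  have "(\<lambda>k. \<Sum>b\<in>{b\<in>KK n (Suc L). proj L b = a}. q (d k) (Suc L) b) \<longlonglongrightarrow> (\<Sum>b\<in>{b\<in>KK n (Suc L). proj L b = a}. ql (Suc L) b)"
    by (intro tendsto_sum ql_lim)
  moreover have "(\<lambda>k. \<Sum>b\<in>{b\<in>KK n (Suc L). proj L b = a}. q (d k) (Suc L) b) = (\<lambda>k. q (d k) L a)"
    using q_cons[OF a] by simp
  ultimately have "(\<lambda>k. q (d k) L a) \<longlonglongrightarrow> (\<Sum>b\<in>{b\<in>KK n (Suc L). proj L b = a}. ql (Suc L) b)" by simp
  then show ?thesis using LIMSEQ_unique[OF ql_lim] by blast
qed

lemma ql_phi: "(\<lambda>k. \<Sum>j\<in>J (d k). w (d k) j * measure M {\<omega>\<in>space M. \<phi> (atk (d k) L j \<omega>)})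
   \<longlonglongrightarrow> (\<Sum>b\<in>KK n L. if \<phi> b then ql L b else 0)"
proof -
  have "(\<lambda>k. \<Sum>b\<in>KK n L. if \<phi> b then q (d k) L b else 0) \<longlonglongrightarrow> (\<Sum>b\<in>KK n L. if \<phi> b then ql L b else 0)"
  proof (intro tendsto_sum)
    fix b show "(\<lambda>k. if \<phi> b then q (d k) L b else 0) \<longlonglongrightarrow> (if \<phi> b then ql L b else 0)"
      by (cases "\<phi> b") (simp_all add: ql_lim)
  qed
  then show ?thesis unfolding q_phi .
qed

end

lemma (in prob_space) mono_limit_cdf:
  fixes N :: "nat \<Rightarrow> 'a set" and Z :: "nat \<Rightarrow> 'a \<Rightarrow> real" and W :: "'a \<Rightarrow> real"
  assumes Nm: "\<And>L. N L \<in> sets M" and Ninc: "\<And>L. N L \<subseteq> N (Suc L)" and N1: "(\<lambda>L. measure M (N L)) \<longlonglongrightarrow> 1"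
    and Zm: "\<And>L. Z L \<in> borel_measurable M" and Wm: "W \<in> borel_measurable M"
    and Zmono: "\<And>L \<omega>. \<omega> \<in> N L \<Longrightarrow> Z L \<omega> \<le> Z (Suc L) \<omega>"
    and Zlim: "\<And>\<omega>. \<omega> \<in> space M \<Longrightarrow> (\<lambda>L. Z L \<omega>) \<longlonglongrightarrow> W \<omega>"
  shows "(\<lambda>L. measure M ((space M - N L) \<union> {\<omega>\<in>space M. Z L \<omega> \<le> t})) \<longlonglongrightarrow> measure M {\<omega>\<in>space M. W \<omega> \<le> t}"
proof -
  have NS: "N L \<subseteq> space M" for L using Nm sets.sets_into_space by auto
  have Nmono: "\<omega> \<in> N L \<Longrightarrow> \<omega> \<in> N (L + m)" for \<omega> L m
    by (induction m) (use Ninc in auto)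
  have Zup: "\<omega> \<in> N L \<Longrightarrow> Z L \<omega> \<le> Z (L + m) \<omega>" for \<omega> L m
  proof (induction m)
    case (Suc m)
    then show ?case using Zmono[OF Nmono[OF Suc.prems, of m]] by simp
  qed simp
  have ZW: "\<omega> \<in> N L \<Longrightarrow> Z L \<omega> \<le> W \<omega>" for \<omega> L
  proof -
    assume w: "\<omega> \<in> N L"
    then have "(\<lambda>m. Z (m + L) \<omega>) \<longlonglongrightarrow> W \<omega>" using Zlim NS
      by (intro LIMSEQ_ignore_initial_segment[where k=L, simplified]) auto
    then show ?thesis using Zup[OF w] by (intro LIMSEQ_le_const[of _ _ "Z L \<omega>"]) (auto simp: add.commute)
  qed
  define E where "E = (\<lambda>L. (space M - N L) \<union> {\<omega>\<in>space M. Z L \<omega> \<le> t})"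
  have Em: "E L \<in> sets M" for L unfolding E_def using Nm Zm by measurable
  have dec: "decseq E"
  proof (rule decseq_SucI)
    fix L show "E (Suc L) \<subseteq> E L"
    proof
      fix \<omega> assume w: "\<omega> \<in> E (Suc L)"
      show "\<omega> \<in> E L"
      proof (cases "\<omega> \<in> N L")
        case True
        then have "\<omega> \<in> N (Suc L)" using Ninc by auto
        then have "Z (Suc L) \<omega> \<le> t" using w unfolding E_def by auto
        then show ?thesis using Zmono[OF True] True NS unfolding E_def by auto
      next
        case False then show ?thesis using w unfolding E_def by auto
      qed
    qed
  qed
  have lim1: "(\<lambda>L. measure M (E L)) \<longlonglongrightarrow> measure M (\<Inter>L. E L)"
    by (rule finite_Lim_measure_decseq) (use Em dec in auto)
  have Wle: "{\<omega>\<in>space M. W \<omega> \<le> t} \<in> sets M" using Wm by measurable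
  have sub1: "{\<omega>\<in>space M. W \<omega> \<le> t} \<subseteq> (\<Inter>L. E L)"
    unfolding E_def using ZW by fastforce
  have sub2: "(\<Inter>L. E L) - {\<omega>\<in>space M. W \<omega> \<le> t} \<subseteq> space M - (\<Union>L. N L)"
  proof
    fix \<omega> assume w: "\<omega> \<in> (\<Inter>L. E L) - {\<omega>\<in>space M. W \<omega> \<le> t}"
    then have sp: "\<omega> \<in> space M" unfolding E_def by auto
    show "\<omega> \<in> space M - (\<Union>L. N L)"
    proof (rule ccontr)
      assume "\<omega> \<notin> space M - (\<Union>L. N L)"
      then obtain L where L: "\<omega> \<in> N L" using sp by auto
      have "Z (m + L) \<omega> \<le> t" for m using w Nmono[OF L, of m] unfolding E_def by (auto simp: add.commute)
      moreover have "(\<lambda>m. Z (m + L) \<omega>) \<longlonglongrightarrow> W \<omega>" using Zlim sp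
        by (intro LIMSEQ_ignore_initial_segment[where k=L, simplified]) auto
      ultimately have "W \<omega> \<le> t" by (intro LIMSEQ_le_const2) auto
      then show False using w sp by auto
    qed
  qed
  have Um: "(\<Union>L. N L) \<in> sets M" using Nm by auto
  have "(\<lambda>L. measure M (N L)) \<longlonglongrightarrow> measure M (\<Union>L. N L)"
    by (rule finite_Lim_measure_incseq) (use Nm Ninc in \<open>auto intro: incseq_SucI\<close>)
  then have "measure M (\<Union>L. N L) = 1" using N1 LIMSEQ_unique by blast
  then have null: "measure M (space M - (\<Union>L. N L)) = 0" using prob_compl[OF Um] by simp
  have Im: "(\<Inter>L. E L) \<in> sets M" using Em by auto
  have "measure M ((\<Inter>L. E L) - {\<omega>\<in>space M. W \<omega> \<le> t}) \<le> measure M (space M - (\<Union>L. N L))"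
    using sub2 Um Im Wle by (intro finite_measure_mono) auto
  then have "measure M ((\<Inter>L. E L) - {\<omega>\<in>space M. W \<omega> \<le> t}) = 0" using null by (simp add: measure_nonneg antisym)
  moreover have "measure M ((\<Inter>L. E L) - {\<omega>\<in>space M. W \<omega> \<le> t}) = measure M (\<Inter>L. E L) - measure M {\<omega>\<in>space M. W \<omega> \<le> t}"
    using Im Wle sub1 by (intro finite_measure_Diff) auto
  ultimately have "measure M (\<Inter>L. E L) = measure M {\<omega>\<in>space M. W \<omega> \<le> t}" by simp
  then show ?thesis using lim1 unfolding E_def by simp
qed

context setting
begin

lemma AA_exists: "\<exists>A. \<forall>L. (\<forall>b\<in>KK n L. A L b \<in> sets M \<and> measure M (A L b) = ql L b) \<and>
     disjoint_family_on (A L) (KK n L) \<and> (\<Union>b\<in>KK n L. A L b) = space M \<and>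
     (\<forall>b\<in>KK n (Suc L). A (Suc L) b \<subseteq> A L (proj L b))"
  by (rule atomless_realize[OF al, of "KK n" ql proj])
    (simp add: finite_KK, rule ql_nn, rule ql_sum, erule proj_KK, erule proj_surj, erule ql_cons)

definition AA :: "nat \<Rightarrow> atm \<Rightarrow> 'a set" where
  "AA = (SOME A. \<forall>L. (\<forall>b\<in>KK n L. A L b \<in> sets M \<and> measure M (A L b) = ql L b) \<and>
     disjoint_family_on (A L) (KK n L) \<and> (\<Union>b\<in>KK n L. A L b) = space M \<and>
     (\<forall>b\<in>KK n (Suc L). A (Suc L) b \<subseteq> A L (proj L b)))"

lemma AA: "\<And>b. b \<in> KK n L \<Longrightarrow> AA L b \<in> sets M" "\<And>b. b \<in> KK n L \<Longrightarrow> measure M (AA L b) = ql L b"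
  "disjoint_family_on (AA L) (KK n L)" "(\<Union>b\<in>KK n L. AA L b) = space M"
  "\<And>b. b \<in> KK n (Suc L) \<Longrightarrow> AA (Suc L) b \<subseteq> AA L (proj L b)"
  using someI_ex[OF AA_exists] unfolding AA_def[symmetric] by blast+

definition xi :: "nat \<Rightarrow> 'a \<Rightarrow> atm" where
  "xi L \<omega> = (THE b. b \<in> KK n L \<and> \<omega> \<in> AA L b)"

lemma xi_eq: "b \<in> KK n L \<Longrightarrow> \<omega> \<in> AA L b \<Longrightarrow> xi L \<omega> = b"
  unfolding xi_def
proof (rule the_equality)
  fix b' assume "b \<in> KK n L" "\<omega> \<in> AA L b" "b' \<in> KK n L \<and> \<omega> \<in> AA L b'"
  then show "b' = b" using AA(3)[of L] unfolding disjoint_family_on_def by blast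
qed auto

lemma xi_in: "\<omega> \<in> space M \<Longrightarrow> xi L \<omega> \<in> KK n L \<and> \<omega> \<in> AA L (xi L \<omega>)"
proof -
  assume "\<omega> \<in> space M"
  then obtain b where "b \<in> KK n L" "\<omega> \<in> AA L b" using AA(4)[of L] by blast
  then show ?thesis using xi_eq by simp
qed

lemma xi_set: "b \<in> KK n L \<Longrightarrow> {\<omega>\<in>space M. xi L \<omega> = b} = AA L b"
proof -
  assume b: "b \<in> KK n L"
  have "AA L b \<subseteq> space M" using AA(1)[OF b] sets.sets_into_space by auto
  then show ?thesis using xi_eq[OF b] xi_in by auto
qed

lemma xi_proj: "\<omega> \<in> space M \<Longrightarrow> xi L \<omega> = proj L (xi (Suc L) \<omega>)"
proof -
  assume w: "\<omega> \<in> space M"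
  have "xi (Suc L) \<omega> \<in> KK n (Suc L)" "\<omega> \<in> AA (Suc L) (xi (Suc L) \<omega>)" using xi_in[OF w] by auto
  then have "\<omega> \<in> AA L (proj L (xi (Suc L) \<omega>))" "proj L (xi (Suc L) \<omega>) \<in> KK n L"
    using AA(5) proj_KK by blast+
  then show ?thesis using xi_eq by simp
qed

lemma xi_meas: "{\<omega>\<in>space M. xi L \<omega> = b} \<in> sets M"
proof (cases "b \<in> KK n L")
  case True then show ?thesis using xi_set AA(1) by simp
next
  case False then have e: "{\<omega>\<in>space M. xi L \<omega> = b} = {}" using xi_in by auto
  show ?thesis by (simp only: e) simp
qed

lemma xi_prob: "measure M {\<omega>\<in>space M. \<phi> (xi L \<omega>)} = (\<Sum>b\<in>KK n L. if \<phi> b then ql L b else 0)"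
proof -
  have "measure M {\<omega>\<in>space M. \<phi> (xi L \<omega>)} = (\<Sum>b\<in>KK n L. if \<phi> b then measure M {\<omega>\<in>space M. xi L \<omega> = b} else 0)"
    by (rule part_meas[OF finite_KK]) (use xi_in xi_meas in auto)
  also have "\<dots> = (\<Sum>b\<in>KK n L. if \<phi> b then ql L b else 0)"
    by (intro sum.cong) (auto simp: xi_set AA(2))
  finally show ?thesis .
qed

lemma xi_pred_meas: "{\<omega>\<in>space M. \<phi> (xi L \<omega>)} \<in> sets M"
proof -
  have "{\<omega>\<in>space M. \<phi> (xi L \<omega>)} = (\<Union>b\<in>{b\<in>KK n L. \<phi> b}. {\<omega>\<in>space M. xi L \<omega> = b})" using xi_in by auto
  then show ?thesis using xi_meas finite_KK by auto
qed

lemma xi_fun_meas: "(\<lambda>\<omega>. g (xi L \<omega>) :: real) \<in> borel_measurable M"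
proof -
  have "(\<lambda>\<omega>. \<Sum>b\<in>KK n L. g b * indicator {\<omega>\<in>space M. xi L \<omega> = b} \<omega>) \<in> borel_measurable M"
    using xi_meas by measurable
  moreover have "\<omega> \<in> space M \<Longrightarrow> g (xi L \<omega>) = (\<Sum>b\<in>KK n L. g b * indicator {\<omega>\<in>space M. xi L \<omega> = b} \<omega>)" for \<omega>
  proof -
    assume w: "\<omega> \<in> space M"
    have "(\<Sum>b\<in>KK n L. g b * indicator {\<omega>\<in>space M. xi L \<omega> = b} \<omega>) = (\<Sum>b\<in>KK n L. if b = xi L \<omega> then g b else 0)"
      using w by (intro sum.cong) (auto simp: indicator_def)
    also have "\<dots> = g (xi L \<omega>)" using xi_in[OF w] finite_KK by simp
    finally show ?thesis by simp
  qed
  ultimately show ?thesis by (subst measurable_cong) auto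
qed

end

context setting
begin

definition yv :: "nat \<Rightarrow> nat \<Rightarrow> 'a \<Rightarrow> real" where
  "yv L i \<omega> = val L i (xi L \<omega>)"

lemma proj_None: "proj L None = None" unfolding proj_def by simp

lemma xi_none_up: "\<omega> \<in> space M \<Longrightarrow> xi L \<omega> \<noteq> None \<Longrightarrow> xi (L + m) \<omega> \<noteq> None"
proof (induction m)
  case (Suc m)
  have "xi (L + m) \<omega> = proj (L + m) (xi (Suc (L + m)) \<omega>)" by (rule xi_proj[OF Suc.prems(1)])
  then show ?case using Suc by (metis add_Suc_right proj_None)
qed simp

lemma yv_mono:
  assumes w: "\<omega> \<in> space M" and nn: "xi L \<omega> \<noteq> None" and i: "i < n"
  shows "yv L i \<omega> \<le> yv (Suc L) i \<omega>" "yv (Suc L) i \<omega> \<le> yv L i \<omega> + 1 / 2^L"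
proof -
  have b: "xi (Suc L) \<omega> \<in> KK n (Suc L)" using xi_in[OF w] by auto
  have p: "proj L (xi (Suc L) \<omega>) = xi L \<omega>" by (rule xi_proj[OF w, symmetric])
  show "yv L i \<omega> \<le> yv (Suc L) i \<omega>" "yv (Suc L) i \<omega> \<le> yv L i \<omega> + 1 / 2^L"
  proof -
    have pn: "proj L (xi (Suc L) \<omega>) \<noteq> None" using p nn by simp
    show "yv L i \<omega> \<le> yv (Suc L) i \<omega>" "yv (Suc L) i \<omega> \<le> yv L i \<omega> + 1 / 2^L"
      unfolding yv_def using val_proj[OF b pn i, unfolded p] by simp_all
  qed
qed

lemma yv_conv: assumes w: "\<omega> \<in> space M" and i: "i < n" shows "convergent (\<lambda>L. yv L i \<omega>)"
proof (cases "\<exists>L0. xi L0 \<omega> \<noteq> None")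
  case True
  then obtain L0 where L0: "xi L0 \<omega> \<noteq> None" by auto
  define a where "a = (\<lambda>m. yv (m + L0) i \<omega>)"
  have nm: "xi (m + L0) \<omega> \<noteq> None" for m using xi_none_up[OF w L0, of m] by (simp add: add.commute)
  have inc: "incseq a" unfolding a_def
    by (rule incseq_SucI) (use yv_mono(1)[OF w nm i] in simp)
  have bnd: "a m + 2 / 2^(m + L0) \<le> a 0 + 2 / 2^L0" for m
  proof (induction m)
    case (Suc m)
    have "a (Suc m) \<le> a m + 1 / 2^(m + L0)" unfolding a_def using yv_mono(2)[OF w nm i, of m] by simp
    moreover have "2 / 2^(Suc m + L0) = 1 / (2::real)^(m + L0)" by simp
    ultimately have "a (Suc m) + 2 / 2^(Suc m + L0) \<le> a m + 2 / 2^(m + L0)" by simp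
    then show ?case using Suc.IH by linarith
  qed simp
  have "a m \<le> a 0 + 2 / 2^L0" for m
  proof -
    have "0 \<le> 2 / (2::real)^(m + L0)" by simp
    then show ?thesis using bnd[of m] by linarith
  qed
  then obtain l where "a \<longlonglongrightarrow> l" using incseq_convergent[OF inc] by blast
  then have "(\<lambda>L. yv L i \<omega>) \<longlonglongrightarrow> l" unfolding a_def by (rule LIMSEQ_offset)
  then show ?thesis by (auto simp: convergent_def)
next
  case False
  then have "\<forall>L. xi L \<omega> = None" by blast
  then have "(\<lambda>L. yv L i \<omega>) = (\<lambda>L. 0)" unfolding yv_def val_def by simp
  then show ?thesis by (simp add: convergent_const)
qed

definition Y :: "nat \<Rightarrow> 'a \<Rightarrow> real" where
  "Y i \<omega> = lim (\<lambda>L. yv L i \<omega>)"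

lemma Y_lim: "\<omega> \<in> space M \<Longrightarrow> i < n \<Longrightarrow> (\<lambda>L. yv L i \<omega>) \<longlonglongrightarrow> Y i \<omega>"
  unfolding Y_def using yv_conv by (simp add: convergent_LIMSEQ_iff)

lemma yv_meas: "yv L i \<in> borel_measurable M"
  unfolding yv_def by (rule xi_fun_meas)

lemma Y_meas: "i < n \<Longrightarrow> Y i \<in> borel_measurable M"
  by (rule borel_measurable_LIMSEQ_real[OF Y_lim yv_meas])

definition NN :: "nat \<Rightarrow> 'a set" where "NN L = {\<omega>\<in>space M. xi L \<omega> \<noteq> None}"

lemma NN_meas: "NN L \<in> sets M" unfolding NN_def by (rule xi_pred_meas)

lemma NN_inc: "NN L \<subseteq> NN (Suc L)"
  unfolding NN_def using xi_none_up[of _ L 1] by auto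

lemma NN_prob: "measure M (NN L) = 1 - ql L None"
proof -
  have "measure M (NN L) = (\<Sum>b\<in>KK n L. if b \<noteq> None then ql L b else 0)"
    unfolding NN_def by (rule xi_prob)
  also have "\<dots> = (\<Sum>b\<in>KK n L. ql L b) - ql L None"
  proof -
    have "None \<in> KK n L" unfolding KK_def by simp
    then have "(\<Sum>b\<in>KK n L. ql L b) = ql L None + (\<Sum>b\<in>KK n L - {None}. ql L b)"
      using finite_KK by (simp add: sum.remove)
    moreover have "(\<Sum>b\<in>KK n L. if b \<noteq> None then ql L b else 0) = (\<Sum>b\<in>{b\<in>KK n L. b \<noteq> None}. ql L b)"
      using finite_KK by (simp only: sum.inter_filter)
    moreover have "{b\<in>KK n L. b \<noteq> None} = KK n L - {None}" by auto
    ultimately show ?thesis by simp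
  qed
  finally show ?thesis using ql_sum by simp
qed

lemma cdf_limit_general:
  fixes Z :: "nat \<Rightarrow> 'a \<Rightarrow> real" and W :: "'a \<Rightarrow> real" and v :: "nat \<Rightarrow> atm \<Rightarrow> real"
  assumes tight: "(\<lambda>L. ql L None) \<longlonglongrightarrow> 0"
    and Zdef: "\<And>L \<omega>. \<omega> \<in> space M \<Longrightarrow> Z L \<omega> = v L (xi L \<omega>)"
    and Zm: "\<And>L. Z L \<in> borel_measurable M" and Wm: "W \<in> borel_measurable M"
    and Zmono: "\<And>L \<omega>. \<omega> \<in> NN L \<Longrightarrow> Z L \<omega> \<le> Z (Suc L) \<omega>"
    and Zlim: "\<And>\<omega>. \<omega> \<in> space M \<Longrightarrow> (\<lambda>L. Z L \<omega>) \<longlonglongrightarrow> W \<omega>"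
  shows "(\<lambda>L. \<Sum>b\<in>KK n L. if b = None \<or> v L b \<le> t then ql L b else 0) \<longlonglongrightarrow> measure M {\<omega>\<in>space M. W \<omega> \<le> t}"
proof -
  have N1: "(\<lambda>L. measure M (NN L)) \<longlonglongrightarrow> 1"
    unfolding NN_prob using tendsto_diff[OF tendsto_const[of 1] tight] by simp
  have "(\<lambda>L. measure M ((space M - NN L) \<union> {\<omega>\<in>space M. Z L \<omega> \<le> t})) \<longlonglongrightarrow> measure M {\<omega>\<in>space M. W \<omega> \<le> t}"
    by (rule mono_limit_cdf[OF NN_meas NN_inc N1 Zm Wm Zmono Zlim])
  moreover have "measure M ((space M - NN L) \<union> {\<omega>\<in>space M. Z L \<omega> \<le> t}) =
     (\<Sum>b\<in>KK n L. if b = None \<or> v L b \<le> t then ql L b else 0)" for L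
  proof -
    have "(space M - NN L) \<union> {\<omega>\<in>space M. Z L \<omega> \<le> t} = {\<omega>\<in>space M. xi L \<omega> = None \<or> v L (xi L \<omega>) \<le> t}"
      unfolding NN_def using Zdef by auto
    then show ?thesis using xi_prob by simp
  qed
  ultimately show ?thesis by simp
qed

end

lemma (in prob_space) rv_cdf_right_cont:
  assumes f: "f \<in> borel_measurable M"
  shows "continuous (at_right t) (rv_cdf M f)"
proof -
  interpret R: real_distribution "distr M borel f" using f by simp
  have "rv_cdf M f = cdf (distr M borel f)"
  proof
    fix x
    have "cdf (distr M borel f) x = measure (distr M borel f) {..x}" by (rule cdf_def2)
    also have "\<dots> = measure M (f -` {..x} \<inter> space M)" using f by (simp add: measure_distr)
    also have "\<dots> = rv_cdf M f x" unfolding rv_cdf_def by (intro arg_cong[where f="measure M"]) auto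
    finally show "rv_cdf M f x = cdf (distr M borel f) x" by simp
  qed
  then show ?thesis using R.cdf_is_right_cont by simp
qed

context setting
begin

definition Gk :: "nat \<Rightarrow> nat \<Rightarrow> real \<Rightarrow> real" where
  "Gk k i t = (\<Sum>j\<in>J k. w k j * F (pm k j i) (t - sh k j i))"

definition HS :: "real \<Rightarrow> real" where
  "HS t = measure M {\<omega>\<in>space M. (\<Sum>i<n. X i \<omega>) \<le> t}"

lemma X_prob: "p < n \<Longrightarrow> measure M {\<omega>\<in>space M. X p \<omega> + c \<le> t} = F p (t - c)"
proof -
  assume p: "p < n"
  have "measure M {\<omega>\<in>space M. X p \<omega> + c \<le> t} = measure M {\<omega>\<in>space M. X p \<omega> \<le> t - c}"
    by (intro arg_cong[where f="measure M"]) auto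
  also have "\<dots> = rv_cdf M (X p) (t - c)" unfolding rv_cdf_def ..
  finally show ?thesis using Xc[OF p] by simp
qed

lemma atk_some:
  assumes "atk k L j \<omega> \<noteq> None" "j \<in> J k"
  shows "\<And>i. i < n \<Longrightarrow> val L i (atk k L j \<omega>) = (of_int (fl L (X (pm k j i) \<omega>)) + of_int (fl L (sh k j i))) / 2^L"
proof -
  fix i assume i: "i < n"
  obtain t where "atk k L j \<omega> = Some t" using assms by auto
  then have a: "atom n L (\<lambda>i. X i \<omega>) (pm k j) (sh k j) = Some t" unfolding atk_def .
  show "val L i (atk k L j \<omega>) = (of_int (fl L (X (pm k j i) \<omega>)) + of_int (fl L (sh k j i))) / 2^L"
    unfolding atk_def using val_atom[OF a i pm_lt[OF assms(2) i]] by simp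
qed

lemma val_bounds:
  assumes "atk k L j \<omega> \<noteq> None" "j \<in> J k" "i < n"
  shows "val L i (atk k L j \<omega>) \<le> X (pm k j i) \<omega> + sh k j i"
    "X (pm k j i) \<omega> + sh k j i < val L i (atk k L j \<omega>) + 2 / 2^L"
proof -
  have e: "val L i (atk k L j \<omega>) = of_int (fl L (X (pm k j i) \<omega>)) / 2^L + of_int (fl L (sh k j i)) / 2^L"
    using atk_some[OF assms] by (simp add: add_divide_distrib)
  show "val L i (atk k L j \<omega>) \<le> X (pm k j i) \<omega> + sh k j i"
    unfolding e using fl_le[of L "X (pm k j i) \<omega>"] fl_le[of L "sh k j i"] by linarith
  show "X (pm k j i) \<omega> + sh k j i < val L i (atk k L j \<omega>) + 2 / 2^L"
    unfolding e using fl_gt[of "X (pm k j i) \<omega>" L] fl_gt[of "sh k j i" L] by (simp add: field_simps)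
qed

lemma sumX_perm: "j \<in> J k \<Longrightarrow> (\<Sum>i<n. X (pm k j i) \<omega> + sh k j i) = (\<Sum>i<n. X i \<omega>)"
proof -
  assume j: "j \<in> J k"
  have "(\<Sum>i<n. X (pm k j i) \<omega> + sh k j i) = (\<Sum>i<n. X (pm k j i) \<omega>) + (\<Sum>i<n. sh k j i)"
    by (simp add: sum.distrib)
  also have "(\<Sum>i<n. X (pm k j i) \<omega>) = (\<Sum>i<n. X i \<omega>)"
    by (rule sum_permutes_reindex[OF pmp[OF j]]) simp
  finally show ?thesis using shs[OF j] by simp
qed

lemma meas_le: "A \<subseteq> B \<Longrightarrow> A \<in> sets M \<Longrightarrow> B \<in> sets M \<Longrightarrow> measure M A \<le> measure M B"
  by (rule finite_measure_mono)

lemma Xsum_meas: "(\<lambda>\<omega>. \<Sum>i<n. X i \<omega>) \<in> borel_measurable M"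
  using Xm by measurable

lemma none_meas: "{\<omega>\<in>space M. atk k L j \<omega> = None} \<in> sets M" by (rule at_meas)

lemma pred_atk_meas: "{\<omega>\<in>space M. \<phi> (atk k L j \<omega>)} \<in> sets M" if "j \<in> J k"
proof -
  have "{\<omega>\<in>space M. \<phi> (atk k L j \<omega>)} = (\<Union>b\<in>{b\<in>KK n L. \<phi> b}. {\<omega>\<in>space M. atk k L j \<omega> = b})"
    using at_KK[OF that] by auto
  then show ?thesis using at_meas finite_KK by auto
qed

lemma QI_lower:
  assumes i: "i < n"
  shows "Gk k i t \<le> (\<Sum>b\<in>KK n L. if b = None \<or> val L i b \<le> t then q k L b else 0)"
proof -
  have "Gk k i t = (\<Sum>j\<in>J k. w k j * measure M {\<omega>\<in>space M. X (pm k j i) \<omega> + sh k j i \<le> t})"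
    unfolding Gk_def using X_prob pm_lt i by simp
  also have "\<dots> \<le> (\<Sum>j\<in>J k. w k j * measure M {\<omega>\<in>space M. atk k L j \<omega> = None \<or> val L i (atk k L j \<omega>) \<le> t})"
  proof (intro sum_mono mult_left_mono wnn meas_le pred_atk_meas)
    fix j assume j: "j \<in> J k"
    show "{\<omega>\<in>space M. X (pm k j i) \<omega> + sh k j i \<le> t} \<subseteq> {\<omega>\<in>space M. atk k L j \<omega> = None \<or> val L i (atk k L j \<omega>) \<le> t}"
      using val_bounds(1)[OF _ j i] by fastforce
    show "{\<omega>\<in>space M. X (pm k j i) \<omega> + sh k j i \<le> t} \<in> sets M"
      using Xm[OF pm_lt[OF j i]] by measurable
  qed
  also have "\<dots> = (\<Sum>b\<in>KK n L. if b = None \<or> val L i b \<le> t then q k L b else 0)"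
    by (rule q_phi[symmetric])
  finally show ?thesis .
qed

lemma q_None: "q k L None = (\<Sum>j\<in>J k. w k j * measure M {\<omega>\<in>space M. atk k L j \<omega> = None})"
  unfolding q_def ..

lemma QI_upper:
  assumes i: "i < n"
  shows "(\<Sum>b\<in>KK n L. if b = None \<or> val L i b \<le> t then q k L b else 0) \<le> q k L None + Gk k i (t + 2 / 2^L)"
proof -
  have "(\<Sum>b\<in>KK n L. if b = None \<or> val L i b \<le> t then q k L b else 0) =
      (\<Sum>j\<in>J k. w k j * measure M {\<omega>\<in>space M. atk k L j \<omega> = None \<or> val L i (atk k L j \<omega>) \<le> t})"
    by (rule q_phi)
  also have "\<dots> \<le> (\<Sum>j\<in>J k. w k j * (measure M {\<omega>\<in>space M. atk k L j \<omega> = None} +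
        measure M {\<omega>\<in>space M. X (pm k j i) \<omega> + sh k j i \<le> t + 2 / 2^L}))"
  proof (intro sum_mono mult_left_mono wnn)
    fix j assume j: "j \<in> J k"
    have m2: "{\<omega>\<in>space M. X (pm k j i) \<omega> + sh k j i \<le> t + 2 / 2^L} \<in> sets M"
      using Xm[OF pm_lt[OF j i]] by measurable
    have "measure M {\<omega>\<in>space M. atk k L j \<omega> = None \<or> val L i (atk k L j \<omega>) \<le> t} \<le>
        measure M ({\<omega>\<in>space M. atk k L j \<omega> = None} \<union> {\<omega>\<in>space M. X (pm k j i) \<omega> + sh k j i \<le> t + 2 / 2^L})"
    proof (rule meas_le)
      show "{\<omega>\<in>space M. atk k L j \<omega> = None \<or> val L i (atk k L j \<omega>) \<le> t} \<subseteq>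
        {\<omega>\<in>space M. atk k L j \<omega> = None} \<union> {\<omega>\<in>space M. X (pm k j i) \<omega> + sh k j i \<le> t + 2 / 2^L}"
        using val_bounds(2)[OF _ j i] by fastforce
    qed (use pred_atk_meas[OF j] none_meas m2 in auto)
    also have "\<dots> \<le> measure M {\<omega>\<in>space M. atk k L j \<omega> = None} + measure M {\<omega>\<in>space M. X (pm k j i) \<omega> + sh k j i \<le> t + 2 / 2^L}"
      by (rule measure_Un_le) (use none_meas m2 in auto)
    finally show "measure M {\<omega>\<in>space M. atk k L j \<omega> = None \<or> val L i (atk k L j \<omega>) \<le> t} \<le> \<dots>" .
  qed
  also have "\<dots> = q k L None + Gk k i (t + 2 / 2^L)"
    unfolding q_None Gk_def using X_prob pm_lt i by (simp add: sum.distrib distrib_left)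
  finally show ?thesis .
qed

lemma QS_lower:
  shows "HS t \<le> (\<Sum>b\<in>KK n L. if b = None \<or> (\<Sum>i<n. val L i b) \<le> t then q k L b else 0)"
proof -
  have "HS t = (\<Sum>j\<in>J k. w k j * HS t)" using wsum by (simp add: sum_distrib_right[symmetric])
  also have "\<dots> \<le> (\<Sum>j\<in>J k. w k j * measure M {\<omega>\<in>space M. atk k L j \<omega> = None \<or> (\<Sum>i<n. val L i (atk k L j \<omega>)) \<le> t})"
  proof (intro sum_mono mult_left_mono wnn)
    fix j assume j: "j \<in> J k"
    show "HS t \<le> measure M {\<omega>\<in>space M. atk k L j \<omega> = None \<or> (\<Sum>i<n. val L i (atk k L j \<omega>)) \<le> t}"
      unfolding HS_def
    proof (rule meas_le)
      show "{\<omega>\<in>space M. (\<Sum>i<n. X i \<omega>) \<le> t} \<subseteq> {\<omega>\<in>space M. atk k L j \<omega> = None \<or> (\<Sum>i<n. val L i (atk k L j \<omega>)) \<le> t}"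
      proof (rule subsetI)
        fix \<omega> assume w0: "\<omega> \<in> {\<omega>\<in>space M. (\<Sum>i<n. X i \<omega>) \<le> t}"
        show "\<omega> \<in> {\<omega>\<in>space M. atk k L j \<omega> = None \<or> (\<Sum>i<n. val L i (atk k L j \<omega>)) \<le> t}"
        proof (cases "atk k L j \<omega> = None")
          case False
          have "(\<Sum>i<n. val L i (atk k L j \<omega>)) \<le> (\<Sum>i<n. X (pm k j i) \<omega> + sh k j i)"
            using val_bounds(1)[OF False j] by (intro sum_mono) auto
          then show ?thesis using sumX_perm[OF j] w0 by simp
        qed (use w0 in simp)
      qed
    qed (use pred_atk_meas[OF j] Xsum_meas in auto)
  qed
  also have "\<dots> = (\<Sum>b\<in>KK n L. if b = None \<or> (\<Sum>i<n. val L i b) \<le> t then q k L b else 0)"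
    by (rule q_phi[symmetric])
  finally show ?thesis .
qed

lemma QS_upper:
  shows "(\<Sum>b\<in>KK n L. if b = None \<or> (\<Sum>i<n. val L i b) \<le> t then q k L b else 0) \<le> q k L None + HS (t + 2 * n / 2^L)"
proof -
  have "(\<Sum>b\<in>KK n L. if b = None \<or> (\<Sum>i<n. val L i b) \<le> t then q k L b else 0) =
      (\<Sum>j\<in>J k. w k j * measure M {\<omega>\<in>space M. atk k L j \<omega> = None \<or> (\<Sum>i<n. val L i (atk k L j \<omega>)) \<le> t})"
    by (rule q_phi)
  also have "\<dots> \<le> (\<Sum>j\<in>J k. w k j * (measure M {\<omega>\<in>space M. atk k L j \<omega> = None} + HS (t + 2 * n / 2^L)))"
  proof (intro sum_mono mult_left_mono wnn)
    fix j assume j: "j \<in> J k"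
    have m2: "{\<omega>\<in>space M. (\<Sum>i<n. X i \<omega>) \<le> t + 2 * n / 2^L} \<in> sets M"
      using Xsum_meas by measurable
    have "measure M {\<omega>\<in>space M. atk k L j \<omega> = None \<or> (\<Sum>i<n. val L i (atk k L j \<omega>)) \<le> t} \<le>
        measure M ({\<omega>\<in>space M. atk k L j \<omega> = None} \<union> {\<omega>\<in>space M. (\<Sum>i<n. X i \<omega>) \<le> t + 2 * n / 2^L})"
    proof (rule meas_le)
      show "{\<omega>\<in>space M. atk k L j \<omega> = None \<or> (\<Sum>i<n. val L i (atk k L j \<omega>)) \<le> t} \<subseteq>
        {\<omega>\<in>space M. atk k L j \<omega> = None} \<union> {\<omega>\<in>space M. (\<Sum>i<n. X i \<omega>) \<le> t + 2 * n / 2^L}"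
      proof (rule subsetI)
        fix \<omega> assume w0: "\<omega> \<in> {\<omega>\<in>space M. atk k L j \<omega> = None \<or> (\<Sum>i<n. val L i (atk k L j \<omega>)) \<le> t}"
        show "\<omega> \<in> {\<omega>\<in>space M. atk k L j \<omega> = None} \<union> {\<omega>\<in>space M. (\<Sum>i<n. X i \<omega>) \<le> t + 2 * n / 2^L}"
        proof (cases "atk k L j \<omega> = None")
          case False
          have "(\<Sum>i<n. X (pm k j i) \<omega> + sh k j i) \<le> (\<Sum>i<n. val L i (atk k L j \<omega>) + 2 / 2^L)"
            using val_bounds(2)[OF False j] by (intro sum_mono less_imp_le) auto
          also have "\<dots> = (\<Sum>i<n. val L i (atk k L j \<omega>)) + 2 * n / 2^L" by (simp add: sum.distrib)
          finally show ?thesis using sumX_perm[OF j] w0 False by simp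
        qed (use w0 in simp)
      qed
    qed (use pred_atk_meas[OF j] none_meas m2 in auto)
    also have "\<dots> \<le> measure M {\<omega>\<in>space M. atk k L j \<omega> = None} + HS (t + 2 * n / 2^L)"
      unfolding HS_def by (rule measure_Un_le) (use none_meas m2 in auto)
    finally show "measure M {\<omega>\<in>space M. atk k L j \<omega> = None \<or> (\<Sum>i<n. val L i (atk k L j \<omega>)) \<le> t} \<le> \<dots>" .
  qed
  also have "\<dots> = q k L None + HS (t + 2 * n / 2^L)"
    unfolding q_None using wsum by (simp add: sum.distrib distrib_left sum_distrib_right[symmetric])
  finally show ?thesis .
qed

end

lemma cdf_01:
  assumes "is_cdf f" shows "0 \<le> f x" "f x \<le> 1"
proof -
  interpret right_continuous_mono f 0 1 using assms unfolding is_cdf_def .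
  have e1: "eventually (\<lambda>y. f y \<le> f x) at_bot"
    unfolding eventually_at_bot_linorder by (intro exI[of _ x]) (auto intro: monoD[OF mono])
  show "0 \<le> f x" by (rule tendsto_le[OF trivial_limit_at_bot_linorder tendsto_const bot e1])
  have e2: "eventually (\<lambda>y. f x \<le> f y) at_top"
    unfolding eventually_at_top_linorder by (intro exI[of _ x]) (auto intro: monoD[OF mono])
  show "f x \<le> 1" by (rule tendsto_le[OF trivial_limit_at_top_linorder top tendsto_const e2])
qed

lemma cdf_mono: "is_cdf f \<Longrightarrow> x \<le> y \<Longrightarrow> f x \<le> f y"
  unfolding is_cdf_def right_continuous_mono_def by (auto dest: monoD)

lemma cdf_top: "is_cdf f \<Longrightarrow> (f \<longlongrightarrow> 1) at_top"
  unfolding is_cdf_def right_continuous_mono_def by auto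

lemma cdf_bot: "is_cdf f \<Longrightarrow> (f \<longlongrightarrow> 0) at_bot"
  unfolding is_cdf_def right_continuous_mono_def by auto

lemma seq_at_top: "filterlim (\<lambda>L::nat. real L - s) at_top sequentially"
  using filterlim_tendsto_add_at_top[OF tendsto_const[of "-s"] filterlim_real_sequentially] by simp

lemma seq_at_bot: "filterlim (\<lambda>L::nat. s - real L) at_bot sequentially"
  using seq_at_top[of s] unfolding filterlim_uminus_at_top by simp

context setting
begin

definition PX :: "nat \<Rightarrow> real" where
  "PX L = measure M {\<omega>\<in>space M. \<not> (\<forall>i<n. inb L (X i \<omega>))}"

lemma PX_lim: "PX \<longlonglongrightarrow> 0"
proof -
  define B where "B = (\<lambda>L. {\<omega>\<in>space M. \<forall>i<n. inb L (X i \<omega>)})"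
  have Bm: "B L \<in> sets M" for L unfolding B_def inb_def using Xm by measurable
  have inc: "incseq B" unfolding B_def by (rule incseq_SucI) (auto intro: inb_Suc)
  have U: "(\<Union>L. B L) = space M"
  proof
    show "(\<Union>L. B L) \<subseteq> space M" unfolding B_def by auto
    show "space M \<subseteq> (\<Union>L. B L)"
    proof
      fix \<omega> assume w: "\<omega> \<in> space M"
      obtain L :: nat where L: "(\<Sum>i<n. \<bar>X i \<omega>\<bar>) < real L" using reals_Archimedean2 by blast
      have "\<bar>X i \<omega>\<bar> \<le> (\<Sum>i<n. \<bar>X i \<omega>\<bar>)" if "i < n" for i
        using that by (intro member_le_sum) auto
      then have "\<forall>i<n. inb L (X i \<omega>)" using L unfolding inb_def by fastforce
      then show "\<omega> \<in> (\<Union>L. B L)" using w unfolding B_def by auto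
    qed
  qed
  have "(\<lambda>L. measure M (B L)) \<longlonglongrightarrow> measure M (\<Union>L. B L)"
    by (rule finite_Lim_measure_incseq) (use Bm inc in auto)
  then have l1: "(\<lambda>L. measure M (B L)) \<longlonglongrightarrow> 1" using U prob_space by simp
  have "PX L = 1 - measure M (B L)" for L
  proof -
    have "{\<omega>\<in>space M. \<not> (\<forall>i<n. inb L (X i \<omega>))} = space M - B L" unfolding B_def by auto
    then show ?thesis unfolding PX_def using prob_compl[OF Bm] by simp
  qed
  then have "PX = (\<lambda>L. 1 - measure M (B L))" by auto
  then show ?thesis using tendsto_diff[OF tendsto_const[of 1] l1] by simp
qed

definition dl :: "real \<Rightarrow> nat \<Rightarrow> real" where
  "dl s L = (\<Sum>i<n. F i (s - real L) + (1 - F i (real L - s)))"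

lemma dl_lim: "dl s \<longlonglongrightarrow> 0"
proof -
  have "(\<lambda>L. F i (s - real L) + (1 - F i (real L - s))) \<longlonglongrightarrow> 0 + (1 - 1)" if i: "i < n" for i
    by (intro tendsto_add tendsto_diff tendsto_const filterlim_compose[OF cdf_bot[OF Fcdf[OF i]] seq_at_bot]
        filterlim_compose[OF cdf_top[OF Fcdf[OF i]] seq_at_top])
  then have "dl s \<longlonglongrightarrow> (\<Sum>i<n. 0)" unfolding dl_def by (intro tendsto_sum) auto
  then show ?thesis by simp
qed

lemma dl_ge: "i < n \<Longrightarrow> F i (s - real L) \<le> dl s L" "i < n \<Longrightarrow> 1 - F i (real L - s) \<le> dl s L"
proof -
  have nn: "\<And>i. i < n \<Longrightarrow> 0 \<le> F i (s - real L)" "\<And>i. i < n \<Longrightarrow> 0 \<le> 1 - F i (real L - s)"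
    using cdf_01[OF Fcdf] by auto
  assume i: "i < n"
  have "F i (s - real L) + (1 - F i (real L - s)) \<le> dl s L"
    unfolding dl_def using i nn by (intro member_le_sum[of i "{..<n}" "\<lambda>i. F i (s - real L) + (1 - F i (real L - s))"]) (auto intro: add_nonneg_nonneg)
  moreover have "0 \<le> F i (s - real L)" "0 \<le> 1 - F i (real L - s)" using nn i by auto
  ultimately show "F i (s - real L) \<le> dl s L" "1 - F i (real L - s) \<le> dl s L" by linarith+
qed

lemma dl_nn: "0 \<le> dl s L"
  unfolding dl_def using cdf_01[OF Fcdf] by (intro sum_nonneg) (auto intro: add_nonneg_nonneg)

lemma tail_one:
  assumes p: "p < n"
  shows "(1 - dl s L) * (if inb L a then 0 else 1) \<le> 1 - F p (s - a) + F p (- s - a)"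
proof -
  have F01: "0 \<le> F p x" "F p x \<le> 1" for x using cdf_01[OF Fcdf[OF p]] by auto
  show ?thesis
  proof (cases "inb L a")
    case True then show ?thesis using F01[of "s - a"] F01[of "- s - a"] by simp
  next
    case False
    then have "a < - real L \<or> real L \<le> a" unfolding inb_def by auto
    then show ?thesis
    proof
      assume a: "a < - real L"
      have "F p (real L - s) \<le> F p (- s - a)" using a by (intro cdf_mono[OF Fcdf[OF p]]) auto
      then show ?thesis using dl_ge(2)[OF p, where s=s and L=L] F01[of "s - a"] False by simp
    next
      assume a: "real L \<le> a"
      have "F p (s - a) \<le> F p (s - real L)" using a by (intro cdf_mono[OF Fcdf[OF p]]) auto
      then show ?thesis using dl_ge(1)[OF p, where s=s and L=L] F01[of "- s - a"] False by simp
    qed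
  qed
qed

lemma tail_sum:
  assumes i: "i < n"
  shows "(1 - dl s L) * (\<Sum>j\<in>J k. w k j * (if inb L (sh k j i) then 0 else 1)) \<le> 1 - Gk k i s + Gk k i (- s)"
proof -
  have "(1 - dl s L) * (\<Sum>j\<in>J k. w k j * (if inb L (sh k j i) then 0 else 1)) =
      (\<Sum>j\<in>J k. w k j * ((1 - dl s L) * (if inb L (sh k j i) then 0 else 1)))"
    by (simp add: sum_distrib_left algebra_simps)
  also have "\<dots> \<le> (\<Sum>j\<in>J k. w k j * (1 - F (pm k j i) (s - sh k j i) + F (pm k j i) (- s - sh k j i)))"
    by (intro sum_mono mult_left_mono wnn tail_one pm_lt i) auto
  also have "\<dots> = 1 - Gk k i s + Gk k i (- s)"
    unfolding Gk_def using wsum by (simp add: algebra_simps sum.distrib sum_subtractf sum_distrib_left[symmetric])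
  finally show ?thesis .
qed

lemma qNone_bound: "q k L None \<le> PX L + (\<Sum>i<n. \<Sum>j\<in>J k. w k j * (if inb L (sh k j i) then 0 else 1))"
proof -
  have PXm: "{\<omega>\<in>space M. \<not> (\<forall>i<n. inb L (X i \<omega>))} \<in> sets M" unfolding inb_def using Xm by measurable
  have "q k L None \<le> (\<Sum>j\<in>J k. w k j * (PX L + (\<Sum>i<n. if inb L (sh k j i) then 0 else 1)))"
    unfolding q_None
  proof (intro sum_mono mult_left_mono wnn)
    fix j assume j: "j \<in> J k"
    show "measure M {\<omega>\<in>space M. atk k L j \<omega> = None} \<le> PX L + (\<Sum>i<n. if inb L (sh k j i) then 0 else 1)"
    proof (cases "\<forall>i<n. inb L (sh k j i)")
      case True
      have "measure M {\<omega>\<in>space M. atk k L j \<omega> = None} \<le> PX L"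
        unfolding PX_def using True by (intro meas_le none_meas PXm) (auto simp: atk_def atom_def)
      moreover have "0 \<le> (\<Sum>i<n. if inb L (sh k j i) then 0 else 1::real)" by (intro sum_nonneg) auto
      ultimately show ?thesis by simp
    next
      case False
      then obtain i where i: "i < n" "\<not> inb L (sh k j i)" by auto
      have "1 \<le> (\<Sum>i<n. if inb L (sh k j i) then 0 else 1::real)"
        using i member_le_sum[of i "{..<n}" "\<lambda>i. if inb L (sh k j i) then 0 else 1::real"] by auto
      moreover have "measure M {\<omega>\<in>space M. atk k L j \<omega> = None} \<le> 1" by (rule prob_le_1)
      moreover have "0 \<le> PX L" unfolding PX_def by simp
      ultimately show ?thesis by linarith
    qed
  qed auto
  also have "\<dots> = PX L + (\<Sum>i<n. \<Sum>j\<in>J k. w k j * (if inb L (sh k j i) then 0 else 1))"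
    using wsum by (simp add: distrib_left sum.distrib sum_distrib_left sum_distrib_right[symmetric] sum.swap[of _ "J k"])
  finally show ?thesis .
qed

end

lemma rc_le:
  fixes f :: "real \<Rightarrow> real"
  assumes rc: "continuous (at_right t) f" and C: "countable C"
    and up: "\<And>y. t < y \<Longrightarrow> y \<notin> C \<Longrightarrow> P \<le> f y"
  shows "P \<le> f t"
proof (rule ccontr)
  assume "\<not> P \<le> f t"
  then have lt: "f t < P" by simp
  have "(f \<longlongrightarrow> f t) (at_right t)" using rc by (simp add: continuous_within)
  then have "eventually (\<lambda>y. f y < P) (at_right t)" using lt by (rule order_tendstoD(2))
  then obtain b where b: "b > t" "\<And>y. t < y \<Longrightarrow> y < b \<Longrightarrow> f y < P"
    unfolding eventually_at_right_field by blast
  obtain y where y: "y \<in> {t<..<b}" "y \<notin> C" using open_minus_countable[OF C, of "{t<..<b}"] b(1) by auto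
  then have "P \<le> f y" using up by auto
  moreover have "f y < P" using y b by auto
  ultimately show False by simp
qed

context setting
begin

lemma Gk_lim: "i < n \<Longrightarrow> isCont (G i) x \<Longrightarrow> (\<lambda>k. Gk (d k) i x) \<longlonglongrightarrow> G i x"
proof -
  assume i: "i < n" and c: "isCont (G i) x"
  have "(\<lambda>k. Gk k i x) \<longlonglongrightarrow> G i x" using wc[OF i] c unfolding weak_conv_def Gk_def by auto
  from LIMSEQ_subseq_LIMSEQ[OF this d_props(1)] show ?thesis by (simp add: o_def)
qed

lemma qsum_lim: "(\<lambda>k. \<Sum>b\<in>KK n L. if \<phi> b then q (d k) L b else 0) \<longlonglongrightarrow> (\<Sum>b\<in>KK n L. if \<phi> b then ql L b else 0)"
proof (intro tendsto_sum)
  fix b show "(\<lambda>k. if \<phi> b then q (d k) L b else 0) \<longlonglongrightarrow> (if \<phi> b then ql L b else 0)"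
    by (cases "\<phi> b") (simp_all add: ql_lim)
qed

lemma G_mono: "i < n \<Longrightarrow> x \<le> y \<Longrightarrow> G i x \<le> G i y"
  using cdf_mono[OF Gcdf] by blast

lemma Gk_mono: "i < n \<Longrightarrow> x \<le> y \<Longrightarrow> Gk k i x \<le> Gk k i y"
  unfolding Gk_def by (intro sum_mono mult_left_mono wnn cdf_mono[OF Fcdf] pm_lt) auto

definition disc :: "real set" where "disc = (\<Union>i\<in>{..<n}. {x. \<not> isCont (G i) x})"

lemma disc_countable: "countable disc"
proof -
  have "mono (G i)" if "i < n" for i using Gcdf[OF that] unfolding is_cdf_def right_continuous_mono_def by auto
  then show ?thesis unfolding disc_def by (auto intro!: countable_UN mono_ctble_discont)
qed

lemma ql_None_bound:
  assumes cs: "\<And>i. i < n \<Longrightarrow> isCont (G i) s \<and> isCont (G i) (- s)" and dl1: "dl s L \<le> 1"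
  shows "(1 - dl s L) * ql L None \<le> (1 - dl s L) * PX L + (\<Sum>i<n. 1 - G i s + G i (- s))"
proof (rule LIMSEQ_le)
  show "(\<lambda>k. (1 - dl s L) * q (d k) L None) \<longlonglongrightarrow> (1 - dl s L) * ql L None"
    by (intro tendsto_mult_left ql_lim)
  show "(\<lambda>k. (1 - dl s L) * PX L + (\<Sum>i<n. 1 - Gk (d k) i s + Gk (d k) i (- s))) \<longlonglongrightarrow>
      (1 - dl s L) * PX L + (\<Sum>i<n. 1 - G i s + G i (- s))"
    using cs by (intro tendsto_add tendsto_const tendsto_sum tendsto_diff Gk_lim) auto
  show "\<exists>N. \<forall>k\<ge>N. (1 - dl s L) * q (d k) L None \<le> (1 - dl s L) * PX L + (\<Sum>i<n. 1 - Gk (d k) i s + Gk (d k) i (- s))"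
  proof (intro exI allI impI)
    fix k :: nat
    have nn: "0 \<le> 1 - dl s L" using dl1 by simp
    have "(1 - dl s L) * q (d k) L None \<le> (1 - dl s L) * (PX L + (\<Sum>i<n. \<Sum>j\<in>J (d k). w (d k) j * (if inb L (sh (d k) j i) then 0 else 1)))"
      by (intro mult_left_mono qNone_bound nn)
    also have "\<dots> = (1 - dl s L) * PX L + (\<Sum>i<n. (1 - dl s L) * (\<Sum>j\<in>J (d k). w (d k) j * (if inb L (sh (d k) j i) then 0 else 1)))"
      by (simp add: distrib_left sum_distrib_left)
    also have "\<dots> \<le> (1 - dl s L) * PX L + (\<Sum>i<n. 1 - Gk (d k) i s + Gk (d k) i (- s))"
      by (intro add_left_mono sum_mono tail_sum) auto
    finally show "(1 - dl s L) * q (d k) L None \<le> (1 - dl s L) * PX L + (\<Sum>i<n. 1 - Gk (d k) i s + Gk (d k) i (- s))" .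
  qed
qed

lemma tight: "(\<lambda>L. ql L None) \<longlonglongrightarrow> 0"
proof (rule LIMSEQ_I)
  fix r :: real assume r: "0 < r"
  define TG where "TG = (\<lambda>s. \<Sum>i<n. 1 - G i s + G i (- s))"
  have "((\<lambda>s. 1 - G i s + G i (- s)) \<longlongrightarrow> 1 - 1 + 0) at_top" if i: "i < n" for i
  proof -
    have "((\<lambda>s. G i (- s)) \<longlongrightarrow> 0) at_top"
      by (rule filterlim_compose[OF cdf_bot[OF Gcdf[OF i]] filterlim_uminus_at_bot_at_top])
    then show ?thesis using cdf_top[OF Gcdf[OF i]]
      by (intro tendsto_add tendsto_diff tendsto_const) auto
  qed
  then have "(TG \<longlongrightarrow> (\<Sum>i<n. 0)) at_top" unfolding TG_def by (intro tendsto_sum) auto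
  then have "eventually (\<lambda>s. TG s < r / 4) at_top" using r by (intro order_tendstoD(2)) auto
  then obtain s0 where s0: "\<And>s. s \<ge> s0 \<Longrightarrow> TG s < r / 4" unfolding eventually_at_top_linorder by blast
  define C where "C = disc \<union> uminus ` disc"
  have C: "countable C" unfolding C_def using disc_countable by auto
  obtain s where s: "s \<in> {max s0 0<..<max s0 0 + 1}" "s \<notin> C"
    using open_minus_countable[OF C, of "{max s0 0<..<max s0 0 + 1}"] by auto
  have cs: "isCont (G i) s \<and> isCont (G i) (- s)" if "i < n" for i
  proof -
    have "s \<notin> disc" "- s \<notin> disc" using s(2) unfolding C_def by (auto simp: image_iff)
    then show ?thesis using that unfolding disc_def by auto
  qed
  have TGs: "TG s < r / 4" using s0 s(1) by auto
  have "eventually (\<lambda>L. dl s L < 1/2) sequentially" using dl_lim[of s] by (intro order_tendstoD(2)) auto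
  moreover have "eventually (\<lambda>L. PX L < r / 4) sequentially" using PX_lim r by (intro order_tendstoD(2)) auto
  ultimately have "eventually (\<lambda>L. dl s L < 1/2 \<and> PX L < r / 4) sequentially" by (rule eventually_conj)
  then obtain N where N: "\<And>L. L \<ge> N \<Longrightarrow> dl s L < 1/2 \<and> PX L < r / 4" unfolding eventually_sequentially by blast
  show "\<exists>N. \<forall>L\<ge>N. norm (ql L None - 0) < r"
  proof (intro exI allI impI)
    fix L assume L: "L \<ge> N"
    have dl: "dl s L < 1/2" "PX L < r / 4" using N[OF L] by auto
    have b: "(1 - dl s L) * ql L None \<le> (1 - dl s L) * PX L + TG s"
      unfolding TG_def using cs dl by (intro ql_None_bound) auto
    have q0: "0 \<le> ql L None" by (rule ql_nn)
    have PX0: "0 \<le> PX L" unfolding PX_def by simp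
    have "(1/2) * ql L None \<le> (1 - dl s L) * ql L None"
      using q0 dl(1) by (intro mult_right_mono) auto
    then have "ql L None / 2 \<le> (1 - dl s L) * ql L None" by simp
    moreover have "(1 - dl s L) * PX L \<le> PX L" using PX0 dl_nn[of s L] dl(1)
      by (intro mult_left_le_one_le) auto
    ultimately have "ql L None / 2 < r / 2" using b TGs dl(2) by linarith
    then show "norm (ql L None - 0) < r" using q0 by simp
  qed
qed

end

lemma two_pow_lim: "(\<lambda>L. c / (2::real)^L) \<longlonglongrightarrow> 0"
proof -
  have "(\<lambda>L. c * (1/2::real)^L) \<longlonglongrightarrow> c * 0" by (intro tendsto_mult tendsto_const LIMSEQ_power_zero) auto
  then show ?thesis by (simp add: power_divide)
qed

context setting
begin

lemma Y_cdf_eq: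
  assumes i: "i < n"
  shows "rv_cdf M (Y i) = G i"
proof
  fix t
  define P where "P = rv_cdf M (Y i)"
  have QL: "(\<lambda>L. \<Sum>b\<in>KK n L. if b = None \<or> val L i b \<le> x then ql L b else 0) \<longlonglongrightarrow> P x" for x
    unfolding P_def rv_cdf_def
  proof (rule cdf_limit_general[OF tight])
    show "\<And>L \<omega>. \<omega> \<in> space M \<Longrightarrow> yv L i \<omega> = val L i (xi L \<omega>)" unfolding yv_def ..
    show "\<And>L. yv L i \<in> borel_measurable M" by (rule yv_meas)
    show "Y i \<in> borel_measurable M" by (rule Y_meas[OF i])
    show "\<And>L \<omega>. \<omega> \<in> NN L \<Longrightarrow> yv L i \<omega> \<le> yv (Suc L) i \<omega>" unfolding NN_def using yv_mono(1) i by auto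
    show "\<And>\<omega>. \<omega> \<in> space M \<Longrightarrow> (\<lambda>L. yv L i \<omega>) \<longlonglongrightarrow> Y i \<omega>" using Y_lim i by auto
  qed
  have lower: "G i x \<le> P x" if c: "isCont (G i) x" for x
  proof (rule LIMSEQ_le_const[OF QL], intro exI allI impI)
    fix L
    show "G i x \<le> (\<Sum>b\<in>KK n L. if b = None \<or> val L i b \<le> x then ql L b else 0)"
    proof (rule LIMSEQ_le[OF Gk_lim[OF i c] qsum_lim], intro exI allI impI)
      fix k show "Gk (d k) i x \<le> (\<Sum>b\<in>KK n L. if b = None \<or> val L i b \<le> x then q (d k) L b else 0)"
        by (rule QI_lower[OF i])
    qed
  qed
  have upper: "P x \<le> G i y" if c: "isCont (G i) y" and xy: "x < y" for x y
  proof -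
    have "eventually (\<lambda>L. 2 / (2::real)^L < y - x) sequentially"
      using two_pow_lim[of 2] xy by (intro order_tendstoD(2)) auto
    then obtain N where N: "\<And>L. L \<ge> N \<Longrightarrow> 2 / (2::real)^L < y - x" unfolding eventually_sequentially by blast
    have "P x \<le> 0 + G i y"
    proof (rule LIMSEQ_le[OF QL tendsto_add[OF tight tendsto_const]], intro exI allI impI)
      fix L assume L: "L \<ge> N"
      show "(\<Sum>b\<in>KK n L. if b = None \<or> val L i b \<le> x then ql L b else 0) \<le> ql L None + G i y"
      proof (rule LIMSEQ_le[OF qsum_lim tendsto_add[OF ql_lim Gk_lim[OF i c]]], intro exI allI impI)
        fix k
        have "(\<Sum>b\<in>KK n L. if b = None \<or> val L i b \<le> x then q (d k) L b else 0) \<le> q (d k) L None + Gk (d k) i (x + 2 / 2^L)"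
          by (rule QI_upper[OF i])
        also have "\<dots> \<le> q (d k) L None + Gk (d k) i y" using N[OF L] by (intro add_left_mono Gk_mono[OF i]) auto
        finally show "(\<Sum>b\<in>KK n L. if b = None \<or> val L i b \<le> x then q (d k) L b else 0) \<le> q (d k) L None + Gk (d k) i y" .
      qed
    qed
    then show ?thesis by simp
  qed
  have Grc: "continuous (at_right t) (G i)" using Gcdf[OF i] unfolding is_cdf_def right_continuous_mono_def by auto
  have Prc: "continuous (at_right t) P" unfolding P_def by (rule rv_cdf_right_cont[OF Y_meas[OF i]])
  have "P t \<le> G i t"
  proof (rule rc_le[OF Grc disc_countable])
    fix y assume "t < y" "y \<notin> disc"
    then show "P t \<le> G i y" using upper i unfolding disc_def by auto
  qed
  moreover have "G i t \<le> P t"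
  proof (rule rc_le[OF Prc disc_countable])
    fix y assume y: "t < y" "y \<notin> disc"
    then have "G i t \<le> G i y" using G_mono[OF i] by auto
    also have "\<dots> \<le> P y" using lower y i unfolding disc_def by auto
    finally show "G i t \<le> P y" .
  qed
  ultimately show "rv_cdf M (Y i) t = G i t" unfolding P_def by simp
qed

lemma Ysum_cdf_eq: "rv_cdf M (\<lambda>\<omega>. \<Sum>i<n. Y i \<omega>) = rv_cdf M (\<lambda>\<omega>. \<Sum>i<n. X i \<omega>)"
proof
  fix t
  define P where "P = rv_cdf M (\<lambda>\<omega>. \<Sum>i<n. Y i \<omega>)"
  have HSr: "HS = rv_cdf M (\<lambda>\<omega>. \<Sum>i<n. X i \<omega>)" unfolding HS_def rv_cdf_def ..
  have QL: "(\<lambda>L. \<Sum>b\<in>KK n L. if b = None \<or> (\<Sum>i<n. val L i b) \<le> x then ql L b else 0) \<longlonglongrightarrow> P x" for x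
    unfolding P_def rv_cdf_def
  proof (rule cdf_limit_general[OF tight])
    show "\<And>L \<omega>. \<omega> \<in> space M \<Longrightarrow> (\<Sum>i<n. yv L i \<omega>) = (\<Sum>i<n. val L i (xi L \<omega>))" unfolding yv_def ..
    show "\<And>L. (\<lambda>\<omega>. \<Sum>i<n. yv L i \<omega>) \<in> borel_measurable M" using yv_meas by measurable
    show "(\<lambda>\<omega>. \<Sum>i<n. Y i \<omega>) \<in> borel_measurable M" using Y_meas by measurable
    show "\<And>L \<omega>. \<omega> \<in> NN L \<Longrightarrow> (\<Sum>i<n. yv L i \<omega>) \<le> (\<Sum>i<n. yv (Suc L) i \<omega>)"
      unfolding NN_def using yv_mono(1) by (auto intro!: sum_mono)
    show "\<And>\<omega>. \<omega> \<in> space M \<Longrightarrow> (\<lambda>L. \<Sum>i<n. yv L i \<omega>) \<longlonglongrightarrow> (\<Sum>i<n. Y i \<omega>)"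
      using Y_lim by (auto intro!: tendsto_sum)
  qed
  have HS_mono: "x \<le> y \<Longrightarrow> HS x \<le> HS y" for x y
    unfolding HS_def by (intro meas_le) (use Xsum_meas in auto)
  have lower: "HS t \<le> P t"
  proof (rule LIMSEQ_le_const[OF QL], intro exI allI impI)
    fix L
    show "HS t \<le> (\<Sum>b\<in>KK n L. if b = None \<or> (\<Sum>i<n. val L i b) \<le> t then ql L b else 0)"
    proof (rule LIMSEQ_le_const[OF qsum_lim], intro exI allI impI)
      fix k show "HS t \<le> (\<Sum>b\<in>KK n L. if b = None \<or> (\<Sum>i<n. val L i b) \<le> t then q (d k) L b else 0)"
        by (rule QS_lower)
    qed
  qed
  have upper: "P t \<le> HS y" if xy: "t < y" for y
  proof -
    have "eventually (\<lambda>L. 2 * real n / (2::real)^L < y - t) sequentially"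
      using two_pow_lim[of "2 * real n"] xy by (intro order_tendstoD(2)) auto
    then obtain N where N: "\<And>L. L \<ge> N \<Longrightarrow> 2 * real n / (2::real)^L < y - t" unfolding eventually_sequentially by blast
    have "P t \<le> 0 + HS y"
    proof (rule LIMSEQ_le[OF QL tendsto_add[OF tight tendsto_const]], intro exI allI impI)
      fix L assume L: "L \<ge> N"
      show "(\<Sum>b\<in>KK n L. if b = None \<or> (\<Sum>i<n. val L i b) \<le> t then ql L b else 0) \<le> ql L None + HS y"
      proof (rule LIMSEQ_le[OF qsum_lim tendsto_add[OF ql_lim tendsto_const]], intro exI allI impI)
        fix k
        have "(\<Sum>b\<in>KK n L. if b = None \<or> (\<Sum>i<n. val L i b) \<le> t then q (d k) L b else 0) \<le> q (d k) L None + HS (t + 2 * n / 2^L)"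
          by (rule QS_upper)
        also have "\<dots> \<le> q (d k) L None + HS y" using N[OF L] by (intro add_left_mono HS_mono) auto
        finally show "(\<Sum>b\<in>KK n L. if b = None \<or> (\<Sum>i<n. val L i b) \<le> t then q (d k) L b else 0) \<le> q (d k) L None + HS y" .
      qed
    qed
    then show ?thesis by simp
  qed
  have HSrc: "continuous (at_right t) HS" unfolding HSr by (rule rv_cdf_right_cont[OF Xsum_meas])
  have "P t \<le> HS t" by (rule rc_le[OF HSrc countable_empty]) (use upper in auto)
  then show "P t = rv_cdf M (\<lambda>\<omega>. \<Sum>i<n. X i \<omega>) t" using lower HSr by simp
qed

lemma main_result:
  "\<exists>Y. (\<forall>i<n. Y i \<in> borel_measurable M \<and> rv_cdf M (Y i) = G i) \<and>
     rv_cdf M (\<lambda>\<omega>. \<Sum>i<n. Y i \<omega>) = rv_cdf M (\<lambda>\<omega>. \<Sum>i<n. X i \<omega>)"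
  using Y_meas Y_cdf_eq Ysum_cdf_eq by blast

end

lemma birk_mix:
  fixes \<Lambda> :: "nat \<Rightarrow> nat \<Rightarrow> real" and g :: "nat \<Rightarrow> real"
  assumes L: "\<forall>i<n. \<forall>j<n. \<Lambda> i j = (\<Sum>p\<in>P. if p i = j then \<beta> p else 0)" and P: "finite P"
    and Pn: "\<forall>p\<in>P. p i < n" and i: "i < n"
  shows "(\<Sum>j<n. \<Lambda> i j * g j) = (\<Sum>p\<in>P. \<beta> p * g (p i))"
proof -
  have "(\<Sum>j<n. \<Lambda> i j * g j) = (\<Sum>j<n. \<Sum>p\<in>P. (if p i = j then \<beta> p * g j else 0))"
    using L i by (intro sum.cong) (auto simp: sum_distrib_right intro!: sum.cong)
  also have "\<dots> = (\<Sum>p\<in>P. \<Sum>j<n. (if p i = j then \<beta> p * g j else 0))" by (rule sum.swap)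
  also have "\<dots> = (\<Sum>p\<in>P. \<beta> p * g (p i))"
    using Pn by (intro sum.cong) (auto simp: sum.delta)
  finally show ?thesis .
qed

theorem proposition19:
  fixes M :: "'a measure" and n :: nat and F G :: "nat \<Rightarrow> real \<Rightarrow> real"
  assumes "prob_space M" and "atomless M"
    and "\<forall>i<n. is_cdf (F i)"
    and "in_closure_A n F G"
  shows "D_set M n F \<subseteq> D_set M n G"
proof
  fix H assume "H \<in> D_set M n F"
  then obtain X :: "nat \<Rightarrow> 'a \<Rightarrow> real" where X: "\<forall>i<n. X i \<in> borel_measurable M \<and> rv_cdf M (X i) = F i"
    and H: "H = rv_cdf M (\<lambda>\<omega>. \<Sum>i<n. X i \<omega>)" unfolding D_set_def by auto
  have Gc: "\<forall>i<n. is_cdf (G i)" using assms(4) unfolding in_closure_A_def by auto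
  obtain S where S: "\<forall>k. in_conv_A n F (S k)" "\<forall>i<n. weak_conv (\<lambda>k. S k i) (G i)"
    using assms(4) unfolding in_closure_A_def by auto
  define Q where "Q = (\<lambda>k (m::nat) (w::nat \<Rightarrow> real) (Hh::nat \<Rightarrow> nat \<Rightarrow> real \<Rightarrow> real).
     (\<forall>l<m. 0 \<le> w l \<and> in_A n F (Hh l)) \<and> (\<Sum>l<m. w l) = 1 \<and>
      (\<forall>i<n. S k i = (\<lambda>t. \<Sum>l<m. w l * Hh l i t)))"
  have "\<forall>k. \<exists>m w Hh. Q k m w Hh"
    using S(1) unfolding in_conv_A_def Q_def .
  then have "\<forall>k. \<exists>t. Q k (fst t) (fst (snd t)) (snd (snd t))" by auto
  from choice[OF this] obtain f where f0: "\<forall>k. Q k (fst (f k)) (fst (snd (f k))) (snd (snd (f k)))" ..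
  have f: "Q k (fst (f k)) (fst (snd (f k))) (snd (snd (f k)))" for k using f0 by blast
  define mm where "mm = (\<lambda>k. fst (f k))"
  define ww where "ww = (\<lambda>k. fst (snd (f k)))"
  define HH where "HH = (\<lambda>k. snd (snd (f k)))"
  have C: "\<And>k. (\<forall>l<mm k. 0 \<le> ww k l \<and> in_A n F (HH k l)) \<and> (\<Sum>l<mm k. ww k l) = 1 \<and>
      (\<forall>i<n. S k i = (\<lambda>t. \<Sum>l<mm k. ww k l * HH k l i t))"
    using f unfolding Q_def mm_def ww_def HH_def by blast
  define R where "R = (\<lambda>k l (Lm :: nat \<Rightarrow> nat \<Rightarrow> real) (x :: nat \<Rightarrow> real).
     doubly_stochastic n Lm \<and> (\<Sum>i<n. x i) = 0 \<and>
      (\<forall>i<n. HH k l i = (\<lambda>t. \<Sum>j<n. Lm i j * shift_cdf (x j) (F j) t)))"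
  have "\<forall>k l. \<exists>Lm x. l < mm k \<longrightarrow> R k l Lm x"
  proof (intro allI)
    fix k l
    show "\<exists>Lm x. l < mm k \<longrightarrow> R k l Lm x"
    proof (cases "l < mm k")
      case True
      then have "in_A n F (HH k l)" using C by auto
      then have "\<exists>Lm x. R k l Lm x" unfolding in_A_def R_def .
      then show ?thesis by blast
    qed simp
  qed
  then have "\<forall>kl. \<exists>t. snd kl < mm (fst kl) \<longrightarrow> R (fst kl) (snd kl) (fst t) (snd t)" by auto
  from choice[OF this] obtain g where g0: "\<forall>kl. snd kl < mm (fst kl) \<longrightarrow> R (fst kl) (snd kl) (fst (g kl)) (snd (g kl))" ..
  define Lm where "Lm = (\<lambda>k l. fst (g (k, l)))"
  define xx where "xx = (\<lambda>k l. snd (g (k, l)))"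
  have A: "\<And>k l. l < mm k \<Longrightarrow> doubly_stochastic n (Lm k l) \<and> (\<Sum>i<n. xx k l i) = 0 \<and>
      (\<forall>i<n. HH k l i = (\<lambda>t. \<Sum>j<n. Lm k l i j * shift_cdf (xx k l j) (F j) t))"
  proof -
    fix k l assume "l < mm k"
    then have "R k l (Lm k l) (xx k l)" using g0[rule_format, of "(k, l)"] unfolding Lm_def xx_def by simp
    then show "doubly_stochastic n (Lm k l) \<and> (\<Sum>i<n. xx k l i) = 0 \<and>
      (\<forall>i<n. HH k l i = (\<lambda>t. \<Sum>j<n. Lm k l i j * shift_cdf (xx k l j) (F j) t))" unfolding R_def .
  qed
  let ?P = "{p. p permutes {..<n}}"
  define BB where "BB = (\<lambda>k l (\<beta> :: (nat \<Rightarrow> nat) \<Rightarrow> real). (\<forall>p. 0 \<le> \<beta> p) \<and> (\<Sum>p\<in>?P. \<beta> p) = 1 \<and>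
      (\<forall>i<n. \<forall>j<n. Lm k l i j = (\<Sum>p\<in>?P. if p i = j then \<beta> p else 0)))"
  have "\<forall>kl. \<exists>\<beta>. snd kl < mm (fst kl) \<longrightarrow> BB (fst kl) (snd kl) \<beta>"
  proof
    fix kl :: "nat \<times> nat"
    show "\<exists>\<beta>. snd kl < mm (fst kl) \<longrightarrow> BB (fst kl) (snd kl) \<beta>"
    proof (cases "snd kl < mm (fst kl)")
      case True
      then have "doubly_stochastic n (Lm (fst kl) (snd kl))" using A by blast
      from birkhoff[OF this] have "\<exists>\<beta>. BB (fst kl) (snd kl) \<beta>" unfolding BB_def .
      then show ?thesis by blast
    qed simp
  qed
  from choice[OF this] obtain bf where bf: "\<forall>kl. snd kl < mm (fst kl) \<longrightarrow> BB (fst kl) (snd kl) (bf kl)" ..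
  define bb where "bb = (\<lambda>k l. bf (k, l))"
  have B: "\<And>k l. l < mm k \<Longrightarrow> (\<forall>p. 0 \<le> bb k l p) \<and> (\<Sum>p\<in>?P. bb k l p) = 1 \<and>
      (\<forall>i<n. \<forall>j<n. Lm k l i j = (\<Sum>p\<in>?P. if p i = j then bb k l p else 0))"
  proof -
    fix k l assume "l < mm k"
    then have "BB k l (bb k l)" using bf[rule_format, of "(k, l)"] unfolding bb_def by simp
    then show "(\<forall>p. 0 \<le> bb k l p) \<and> (\<Sum>p\<in>?P. bb k l p) = 1 \<and>
      (\<forall>i<n. \<forall>j<n. Lm k l i j = (\<Sum>p\<in>?P. if p i = j then bb k l p else 0))" unfolding BB_def .
  qed
  have finP: "finite ?P" by (rule finite_permutations) simp
  have Pn: "\<forall>p\<in>?P. \<forall>i<n. p i < n" using permutes_in_image by fastforce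
  define J where "J = (\<lambda>k. {..<mm k} \<times> ?P)"
  define w where "w = (\<lambda>k (lp :: nat \<times> (nat \<Rightarrow> nat)). ww k (fst lp) * bb k (fst lp) (snd lp))"
  define pm where "pm = (\<lambda>(k::nat) (lp :: nat \<times> (nat \<Rightarrow> nat)). snd lp)"
  define sh where "sh = (\<lambda>k (lp :: nat \<times> (nat \<Rightarrow> nat)) i. xx k (fst lp) (snd lp i))"
  interpret setting M n F G X J w pm sh
  proof (intro setting.intro setting_axioms.intro)
    show "prob_space M" by (rule assms(1))
    show "atomless M" by (rule assms(2))
    show "\<And>i. i < n \<Longrightarrow> is_cdf (F i)" using assms(3) by auto
    show "\<And>i. i < n \<Longrightarrow> is_cdf (G i)" using Gc by auto
    show "\<And>i. i < n \<Longrightarrow> X i \<in> borel_measurable M" using X by auto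
    show "\<And>i. i < n \<Longrightarrow> rv_cdf M (X i) = F i" using X by auto
    show "\<And>k. finite (J k)" unfolding J_def using finP by auto
    show "\<And>k j. j \<in> J k \<Longrightarrow> 0 \<le> w k j" unfolding J_def w_def using C B by auto
    show "\<And>k. (\<Sum>j\<in>J k. w k j) = 1"
    proof -
      fix k
      have "(\<Sum>j\<in>J k. w k j) = (\<Sum>l<mm k. \<Sum>p\<in>?P. ww k l * bb k l p)"
        unfolding J_def w_def by (simp add: sum.cartesian_product case_prod_unfold)
      also have "\<dots> = (\<Sum>l<mm k. ww k l)"
        using B by (intro sum.cong) (auto simp: sum_distrib_left[symmetric])
      finally show "(\<Sum>j\<in>J k. w k j) = 1" using C by simp
    qed
    show "\<And>k j. j \<in> J k \<Longrightarrow> pm k j permutes {..<n}" unfolding J_def pm_def by auto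
    show "\<And>k j. j \<in> J k \<Longrightarrow> (\<Sum>i<n. sh k j i) = 0"
    proof -
      fix k j assume j: "j \<in> J k"
      then have "snd j permutes {..<n}" "fst j < mm k" unfolding J_def by auto
      then show "(\<Sum>i<n. sh k j i) = 0" unfolding sh_def
        using sum_permutes_reindex[of "snd j" "{..<n}" "xx k (fst j)"] A by simp
    qed
    show "\<And>i. i < n \<Longrightarrow> weak_conv (\<lambda>k t. \<Sum>j\<in>J k. w k j * F (pm k j i) (t - sh k j i)) (G i)"
    proof -
      fix i assume i: "i < n"
      have "(\<lambda>k t. \<Sum>j\<in>J k. w k j * F (pm k j i) (t - sh k j i)) = (\<lambda>k. S k i)"
      proof (intro ext)
        fix k t
        have "(\<Sum>j\<in>J k. w k j * F (pm k j i) (t - sh k j i)) =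
          (\<Sum>l<mm k. \<Sum>p\<in>?P. ww k l * bb k l p * F (p i) (t - xx k l (p i)))"
          unfolding J_def w_def pm_def sh_def by (simp add: sum.cartesian_product case_prod_unfold)
        also have "\<dots> = (\<Sum>l<mm k. ww k l * HH k l i t)"
        proof (intro sum.cong refl)
          fix l assume l: "l \<in> {..<mm k}"
          have "HH k l i t = (\<Sum>j<n. Lm k l i j * shift_cdf (xx k l j) (F j) t)" using A l i by auto
          also have "\<dots> = (\<Sum>p\<in>?P. bb k l p * shift_cdf (xx k l (p i)) (F (p i)) t)"
            by (rule birk_mix[where g="\<lambda>j. shift_cdf (xx k l j) (F j) t"]) (use B l finP Pn i in auto)
          finally show "(\<Sum>p\<in>?P. ww k l * bb k l p * F (p i) (t - xx k l (p i))) = ww k l * HH k l i t"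
            by (simp add: shift_cdf_def sum_distrib_left mult.assoc)
        qed
        also have "\<dots> = S k i t" using C i by simp
        finally show "(\<Sum>j\<in>J k. w k j * F (pm k j i) (t - sh k j i)) = S k i t" .
      qed
      then show "weak_conv (\<lambda>k t. \<Sum>j\<in>J k. w k j * F (pm k j i) (t - sh k j i)) (G i)" using S(2) i by simp
    qed
  qed
  obtain Y where Y: "\<forall>i<n. Y i \<in> borel_measurable M \<and> rv_cdf M (Y i) = G i"
    "rv_cdf M (\<lambda>\<omega>. \<Sum>i<n. Y i \<omega>) = rv_cdf M (\<lambda>\<omega>. \<Sum>i<n. X i \<omega>)"
    using main_result by blast
  then show "H \<in> D_set M n G" unfolding D_set_def H by auto
qed

end
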